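(* Let $n\ge1$ and let $(p_{i,j})_{1\le i\le j\le n}$ be any family of $\frac{n(n+1)}{2}$ primitive elements of ${\cal H}_R$. Let $C$ be a $\mathbb{Q}$-vector space with basis $(e_0,\dots,e_n)$ and define $\Delta_C:C\to{\cal H}_R\otimes C$ by $\Delta_C(e_0)=1\otimes e_0$ and, for $1\le i\le n$, $$\Delta_C(e_i)=\Big[\sum_{j=0}^{i-1}\Big(\sum_{I_{i_1,j_1}\cdots I_{i_k,j_k}\in{\cal D}_{j+1,i}}p_{i_k,j_k}\top\cdots\top p_{i_1,j_1}\Big)\otimes e_j\Big]+1\otimes e_i.$$ Then $(C,\Delta_C)$ is a left ${\cal H}_R$-comodule (denoted $C_{(p_{i,j})}$).
   Context: A rooted tree is a finite connected and simply connected graph with a distinguished vertex (the root), edges oriented away from the root; its weight is its number of vertices. ${\cal H}_R$ is the commutative polynomial algebra over $\mathbb{Q}$ on the isomorphism classes of rooted trees; monomials are forests ($1$ is the empty forest). An admissible cut $C$ of a tree $t$ is a nonempty set of edges such that every path from the root to a vertex contains at most one edge of $C$; removing them gives a forest in which $R^C(t)$ is the tree containing the root and $P^C(t)$ the product of the others. ${\cal H}_R$ is a Hopf algebra with coproduct the algebra morphism $\Delta$ with $\Delta(t)=1\otimes t+t\otimes1+\sum_C P^C(t)\otimes R^C(t)$ on trees and counit $\varepsilon(1)=1$, $\varepsilon(t)=0$ on trees; $x$ is primitive iff $\Delta(x)=x\otimes1+1\otimes x$. For forests $M,N$: $M\top N=0$ if $N=1$, and otherwise $M\top N=\frac{1}{weight(N)}\sum_v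 N_v$, where $v$ runs over vertices of $N$ and $N_v$ is obtained from $N$ by attaching every tree of $M$ to $v$ (an edge from $v$ to each root of $M$); extended bilinearly; $p_k\top\cdots\top p_1:=(p_k\top\cdots\top p_2)\top p_1$. For integers $1\le i\le j$, $I_{i,j}=\{i,\dots,j\}$; a decomposition of $I_{i,j}$ is a partition of $I_{i,j}$ into intervals, written $I_{i_1,j_1}\cdots I_{i_k,j_k}$ with $i=i_1\le j_1<i_2\le j_2<\cdots<i_k\le j_k=j$ and $i_{r+1}=j_r+1$; ${\cal D}_{i,j}$ is the set of decompositions of $I_{i,j}$. A left ${\cal H}_R$-comodule is a vector space with a coassociative, counital linear map $C\to{\cal H}_R\otimes C$. *)

theory Defs
  imports Complex_Main "HOL-Library.Multiset" "HOL-Library.Poly_Mapping" "HOL-Library.Product_Plus"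
begin

text \<open>Isomorphism classes of (unordered) rooted trees: a tree is its root together
  with the multiset of subtrees hanging from the children of the root.
  Forests (monomials of H_R) are multisets of trees; the empty multiset is the empty forest 1.\<close>

datatype rtree = Node "rtree multiset"

type_synonym forest = "rtree multiset"

primrec weight_tree :: "rtree \<Rightarrow> nat" where
  "weight_tree (Node cs) = Suc (sum_mset (image_mset weight_tree cs))"

definition weight :: "forest \<Rightarrow> nat" where
  "weight F = sum_mset (image_mset weight_tree F)"

text \<open>H_R = forest  =>0  rat (product = product of forests, i.e.
  the polynomial algebra on trees); H_R \<otimes> H_R = (forest \<times> forest)  =>0  rat, etc.\<close>

type_synonym HR = "forest \<Rightarrow>\<^sub>0 rat"

definition smul :: "rat \<Rightarrow> ('a \<Rightarrow>\<^sub>0 rat) \<Rightarrow> ('a \<Rightarrow>\<^sub>0 rat)" where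
  "smul r x = Poly_Mapping.map (\<lambda>c. r * c) x"

definition lin :: "('a \<Rightarrow> ('b \<Rightarrow>\<^sub>0 rat)) \<Rightarrow> ('a \<Rightarrow>\<^sub>0 rat) \<Rightarrow> ('b \<Rightarrow>\<^sub>0 rat)" where
  "lin f x = (\<Sum>a\<in>Poly_Mapping.keys x. smul (Poly_Mapping.lookup x a) (f a))"

definition tens :: "('a \<Rightarrow>\<^sub>0 rat) \<Rightarrow> ('b \<Rightarrow>\<^sub>0 rat) \<Rightarrow> ('a \<times> 'b \<Rightarrow>\<^sub>0 rat)" where
  "tens x y = (\<Sum>a\<in>Poly_Mapping.keys x. \<Sum>b\<in>Poly_Mapping.keys y.
       Poly_Mapping.single (a, b) (Poly_Mapping.lookup x a * Poly_Mapping.lookup y b))"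

definition basis :: "'a \<Rightarrow> ('a \<Rightarrow>\<^sub>0 rat)" where
  "basis a = Poly_Mapping.single a 1"

definition tree :: "rtree \<Rightarrow> HR" where
  "tree t = basis {#t#}"

text \<open>cut_sum t = sum over all admissible cuts C of t, *including the empty cut*, of
  P^C(t) \<otimes> R^C(t).  An admissible cut of Node cs is obtained by choosing, independently
  for every child c of the root, either to cut the edge from the root to c (then c goes
  entirely into the pruned part, and no other edge of c may be cut), or not to cut it and
  to choose an admissible cut (possibly empty) inside c.  The right tensor factor of the
  product below records the forest of root-parts of the uncut children, which is then
  grafted onto a new root.\<close>

definition graft_root :: "(forest \<times> forest \<Rightarrow>\<^sub>0 rat) \<Rightarrow> (forest \<times> forest \<Rightarrow>\<^sub>0 rat)" where
  "graft_root x = lin (\<lambda>(P, F). basis (P, {#Node F#})) x"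

primrec cut_sum :: "rtree \<Rightarrow> (forest \<times> forest \<Rightarrow>\<^sub>0 rat)" where
  "cut_sum (Node cs) =
     graft_root (prod_mset (image_mset (\<lambda>c. basis ({#c#}, {#}) + cut_sum c) cs))"

text \<open>\<Delta>(t) = 1 \<otimes> t + t \<otimes> 1 + \<Sum>_{C nonempty} P^C(t) \<otimes> R^C(t); the empty cut term is 1 \<otimes> t.\<close>
definition Delta_tree :: "rtree \<Rightarrow> (forest \<times> forest \<Rightarrow>\<^sub>0 rat)" where
  "Delta_tree t = basis ({#t#}, {#}) + cut_sum t"

definition Delta :: "HR \<Rightarrow> (forest \<times> forest \<Rightarrow>\<^sub>0 rat)" where
  "Delta x = lin (\<lambda>F. prod_mset (image_mset Delta_tree F)) x"

definition counit :: "HR \<Rightarrow> rat" where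
  "counit x = Poly_Mapping.lookup x {#}"

definition primitive :: "HR \<Rightarrow> bool" where
  "primitive x \<longleftrightarrow> Delta x = tens x 1 + tens 1 x"

text \<open>graft M t: multiset of the trees t_v, v running over the vertices of t, where t_v is
  t with every tree of M attached to v.\<close>
primrec graft :: "forest \<Rightarrow> rtree \<Rightarrow> rtree multiset" where
  "graft M (Node cs) =
     add_mset (Node (cs + M))
       (sum_mset (image_mset (\<lambda>c. image_mset (\<lambda>c'. Node (add_mset c' (cs - {#c#}))) (graft M c)) cs))"

text \<open>graft_forest M N: multiset of the forests N_v, v running over the vertices of N.\<close>
definition graft_forest :: "forest \<Rightarrow> forest \<Rightarrow> forest multiset" where
  "graft_forest M N =
     sum_mset (image_mset (\<lambda>t. image_mset (\<lambda>t'. add_mset t' (N - {#t#})) (graft M t)) N)"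

definition top_forest :: "forest \<Rightarrow> forest \<Rightarrow> HR" where
  "top_forest M N = (if N = {#} then 0 else
     smul (1 / of_nat (weight N)) (sum_mset (image_mset basis (graft_forest M N))))"

definition top :: "HR \<Rightarrow> HR \<Rightarrow> HR" where
  "top x y = (\<Sum>M\<in>Poly_Mapping.keys x. \<Sum>N\<in>Poly_Mapping.keys y.
      smul (Poly_Mapping.lookup x M * Poly_Mapping.lookup y N) (top_forest M N))"

text \<open>itop [q1, ..., qk] = qk \<top> ... \<top> q1 = (qk \<top> ... \<top> q2) \<top> q1.\<close>
fun itop :: "HR list \<Rightarrow> HR" where
  "itop [] = 0"
| "itop [q] = q"
| "itop (q # qs) = top (itop qs) q"

text \<open>A decomposition I_{i1,j1} ... I_{ik,jk} of I_{a,b} is encoded as the list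
  [(i1,j1), ..., (ik,jk)].\<close>
definition decomps :: "nat \<Rightarrow> nat \<Rightarrow> (nat \<times> nat) list set" where
  "decomps a b = {ds. ds \<noteq> [] \<and> fst (hd ds) = a \<and> snd (last ds) = b
      \<and> (\<forall>r<length ds. fst (ds ! r) \<le> snd (ds ! r))
      \<and> (\<forall>r. Suc r < length ds \<longrightarrow> fst (ds ! Suc r) = snd (ds ! r) + 1)}"

text \<open>C has basis e_0, ..., e_n, realised as {v :: nat  =>0  rat. keys v \<subseteq> {0..n}}, e_i = basis i.
  deltaC p i = \<Delta>_C(e_i).\<close>
definition deltaC :: "(nat \<Rightarrow> nat \<Rightarrow> HR) \<Rightarrow> nat \<Rightarrow> (forest \<times> nat \<Rightarrow>\<^sub>0 rat)" where
  "deltaC p i =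
     (\<Sum>j<i. tens (\<Sum>ds\<in>decomps (Suc j) i. itop (map (\<lambda>(a, b). p a b) ds)) (basis j))
     + tens 1 (basis i)"

definition DeltaC :: "(nat \<Rightarrow> nat \<Rightarrow> HR) \<Rightarrow> (nat \<Rightarrow>\<^sub>0 rat) \<Rightarrow> (forest \<times> nat \<Rightarrow>\<^sub>0 rat)" where
  "DeltaC p v = lin (deltaC p) v"

definition Delta_id :: "(forest \<times> nat \<Rightarrow>\<^sub>0 rat) \<Rightarrow> (forest \<times> forest \<times> nat \<Rightarrow>\<^sub>0 rat)" where
  "Delta_id x = lin (\<lambda>(F, i). lin (\<lambda>(A, B). basis (A, B, i)) (Delta (basis F))) x"

definition id_tensor :: "((nat \<Rightarrow>\<^sub>0 rat) \<Rightarrow> (forest \<times> nat \<Rightarrow>\<^sub>0 rat))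
     \<Rightarrow> (forest \<times> nat \<Rightarrow>\<^sub>0 rat) \<Rightarrow> (forest \<times> forest \<times> nat \<Rightarrow>\<^sub>0 rat)" where
  "id_tensor DC x = lin (\<lambda>(F, i). tens (basis F) (DC (basis i))) x"

definition counit_id :: "(forest \<times> nat \<Rightarrow>\<^sub>0 rat) \<Rightarrow> (nat \<Rightarrow>\<^sub>0 rat)" where
  "counit_id x = lin (\<lambda>(F, i). smul (counit (basis F)) (basis i)) x"

text \<open>(V, DC) is a left H_R-comodule, where V = {v. keys v \<subseteq> B} is the Q-vector space with
  basis B: DC is a linear map V \<rightarrow> H_R \<otimes> V, coassociative and counital.\<close>
definition is_left_comodule ::
  "nat set \<Rightarrow> ((nat \<Rightarrow>\<^sub>0 rat) \<Rightarrow> (forest \<times> nat \<Rightarrow>\<^sub>0 rat)) \<Rightarrow> bool" where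
  "is_left_comodule B DC \<longleftrightarrow>
     (\<forall>u v r. Poly_Mapping.keys u \<subseteq> B \<longrightarrow> Poly_Mapping.keys v \<subseteq> B \<longrightarrow>
        DC (u + v) = DC u + DC v \<and> DC (smul r v) = smul r (DC v))
   \<and> (\<forall>v. Poly_Mapping.keys v \<subseteq> B \<longrightarrow>
        (\<forall>F i. Poly_Mapping.lookup (DC v) (F, i) \<noteq> 0 \<longrightarrow> i \<in> B)
      \<and> Delta_id (DC v) = id_tensor DC (DC v)
      \<and> counit_id (DC v) = v)"

end

theory Submission
  imports Defs
begin


lemma lookup_smul[simp]: "Poly_Mapping.lookup (smul r x) a = r * Poly_Mapping.lookup x a"
  unfolding smul_def by (simp add: Poly_Mapping.map.rep_eq when_def)

lemma smul_add_right: "smul r (x + y) = smul r x + smul r y"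
  by (rule poly_mapping_eqI) (simp add: lookup_add algebra_simps)
lemma smul_add_left: "smul (r + s) x = smul r x + smul s x"
  by (rule poly_mapping_eqI) (simp add: lookup_add algebra_simps)
lemma smul_zero_right[simp]: "smul r 0 = 0"
  by (rule poly_mapping_eqI) simp
lemma smul_zero_left[simp]: "smul 0 x = 0"
  by (rule poly_mapping_eqI) simp
lemma smul_one[simp]: "smul 1 x = x"
  by (rule poly_mapping_eqI) simp
lemma smul_smul[simp]: "smul r (smul s x) = smul (r * s) x"
  by (rule poly_mapping_eqI) simp
lemma smul_sum: "smul r (sum f S) = (\<Sum>a\<in>S. smul r (f a))"
  by (induction S rule: infinite_finite_induct) (auto simp: smul_add_right)
lemma smul_single[simp]: "smul r (Poly_Mapping.single a c) = Poly_Mapping.single a (r * c)"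
  by (rule poly_mapping_eqI) (simp add: lookup_single when_def)
lemma smul_uminus: "smul r (- x) = - smul r x"
  by (rule poly_mapping_eqI) simp
lemma smul_diff_right: "smul r (x - y) = smul r x - smul r y"
  by (rule poly_mapping_eqI) (simp add: lookup_minus algebra_simps)

lemma smul_conv_mult: "smul r x = Poly_Mapping.single 0 r * (x :: ('a::monoid_add \<Rightarrow>\<^sub>0 rat))"
  unfolding smul_def by (metis mult_map_scale_conv_mult)

lemma smul_mult_left: "smul r x * y = smul r (x * (y :: ('a::monoid_add \<Rightarrow>\<^sub>0 rat)))"
  by (simp add: smul_conv_mult mult.assoc)

lemma smul_mult_right: "x * smul r y = smul r (x * (y :: ('a::comm_monoid_add \<Rightarrow>\<^sub>0 rat)))"
  by (simp add: smul_conv_mult mult.left_commute)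

lemma lin_superset:
  assumes "finite S" "Poly_Mapping.keys x \<subseteq> S"
  shows "lin f x = (\<Sum>a\<in>S. smul (Poly_Mapping.lookup x a) (f a))"
  unfolding lin_def using assms
  by (intro sum.mono_neutral_left) (auto simp: in_keys_iff)

lemma lin_add: "lin f (x + y) = lin f x + lin f y"
proof -
  let ?S = "Poly_Mapping.keys x \<union> Poly_Mapping.keys y"
  have "Poly_Mapping.keys (x + y) \<subseteq> ?S" by (rule keys_add)
  then have "lin f (x + y) = (\<Sum>a\<in>?S. smul (Poly_Mapping.lookup (x+y) a) (f a))"
    by (intro lin_superset) auto
  also have "\<dots> = (\<Sum>a\<in>?S. smul (Poly_Mapping.lookup x a) (f a)) + (\<Sum>a\<in>?S. smul (Poly_Mapping.lookup y a) (f a))"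
    by (simp add: lookup_add smul_add_left sum.distrib)
  also have "\<dots> = lin f x + lin f y"
    by (subst (1 2) lin_superset[of ?S]) auto
  finally show ?thesis .
qed

lemma lin_zero[simp]: "lin f 0 = 0"
  by (simp add: lin_def)

lemma lin_smul: "lin f (smul r x) = smul r (lin f x)"
proof -
  have "lin f (smul r x) = (\<Sum>a\<in>Poly_Mapping.keys x. smul (Poly_Mapping.lookup (smul r x) a) (f a))"
    by (rule lin_superset) (auto simp: in_keys_iff)
  then show ?thesis by (simp add: lin_def smul_sum)
qed

lemma lin_single[simp]: "lin f (Poly_Mapping.single a c) = smul c (f a)"
  by (simp add: lin_def)

lemma lin_basis[simp]: "lin f (basis a) = f a"
  by (simp add: basis_def)

lemma lin_sum: "lin f (sum g S) = (\<Sum>i\<in>S. lin f (g i))"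
  by (induction S rule: infinite_finite_induct) (auto simp: lin_add)

lemma lin_uminus: "lin f (- x) = - lin f x"
proof -
  have "lin f (- x) + lin f x = 0" by (simp add: lin_add[symmetric])
  then show ?thesis by (simp add: eq_neg_iff_add_eq_0)
qed

lemma lin_diff: "lin f (x - y) = lin f x - lin f y"
  by (metis diff_conv_add_uminus lin_add lin_uminus)

lemma lin_cong: "(\<And>a. a \<in> Poly_Mapping.keys x \<Longrightarrow> f a = g a) \<Longrightarrow> lin f x = lin g x"
  by (simp add: lin_def)

lemma lin_fun_add: "lin (\<lambda>a. f a + g a) x = lin f x + lin g x"
  by (simp add: lin_def smul_add_right sum.distrib)

lemma lin_fun_zero[simp]: "lin (\<lambda>a. 0) x = 0"
  by (simp add: lin_def)

lemma lin_fun_smul: "lin (\<lambda>a. smul r (f a)) x = smul r (lin f x)"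
  by (simp add: lin_def smul_sum mult.commute)

lemma lin_fun_sum: "lin (\<lambda>a. \<Sum>i\<in>S. f i a) x = (\<Sum>i\<in>S. lin (f i) x)"
  by (induction S rule: infinite_finite_induct) (auto simp: lin_fun_add)

lemma lin_expand: "lin basis x = x"
proof (rule poly_mapping_eqI)
  fix k
  show "Poly_Mapping.lookup (lin basis x) k = Poly_Mapping.lookup x k"
    unfolding lin_def basis_def lookup_sum
    by (simp add: lookup_single when_def in_keys_iff sum.delta)
qed

definition linear_pm :: "(('a \<Rightarrow>\<^sub>0 rat) \<Rightarrow> ('b \<Rightarrow>\<^sub>0 rat)) \<Rightarrow> bool" where
  "linear_pm L \<longleftrightarrow> (\<forall>x y. L (x + y) = L x + L y) \<and> (\<forall>r x. L (smul r x) = smul r (L x))"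

lemma linear_pmI: "(\<And>x y. L (x + y) = L x + L y) \<Longrightarrow> (\<And>r x. L (smul r x) = smul r (L x)) \<Longrightarrow> linear_pm L"
  by (simp add: linear_pm_def)

lemma linear_pm_add: "linear_pm L \<Longrightarrow> L (x + y) = L x + L y"
  by (simp add: linear_pm_def)
lemma linear_pm_smul: "linear_pm L \<Longrightarrow> L (smul r x) = smul r (L x)"
  by (simp add: linear_pm_def)
lemma linear_pm_zero: "linear_pm L \<Longrightarrow> L 0 = 0"
  by (metis linear_pm_smul smul_zero_left)
lemma linear_pm_sum: assumes "linear_pm L" shows "L (sum f S) = (\<Sum>i\<in>S. L (f i))"
  by (induction S rule: infinite_finite_induct) (auto simp: linear_pm_add[OF assms] linear_pm_zero[OF assms])

lemma linear_pm_lin[simp, intro]: "linear_pm (lin f)"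
  by (simp add: linear_pm_def lin_add lin_smul)

lemma linear_pm_lin_comp: assumes "linear_pm L" shows "L (lin f x) = lin (\<lambda>a. L (f a)) x"
  unfolding lin_def by (simp add: linear_pm_sum[OF assms] linear_pm_smul[OF assms])

lemma linear_pm_expand: assumes "linear_pm L" shows "L x = lin (\<lambda>a. L (basis a)) x"
proof -
  have "L (lin basis x) = lin (\<lambda>a. L (basis a)) x" by (rule linear_pm_lin_comp[OF assms])
  then show ?thesis by (simp only: lin_expand)
qed

lemma linear_pm_eqI:
  assumes "linear_pm L" "linear_pm L'" "\<And>a. L (basis a) = L' (basis a)"
  shows "L x = L' x"
  using linear_pm_expand[OF assms(1), of x] linear_pm_expand[OF assms(2), of x] assms(3) by simp

lemma linear_pm_comp: "linear_pm L \<Longrightarrow> linear_pm L' \<Longrightarrow> linear_pm (\<lambda>x. L (L' x))"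
  by (simp add: linear_pm_def)

lemma linear_pm_mult_left: "linear_pm (\<lambda>x. x * (y :: ('a::monoid_add \<Rightarrow>\<^sub>0 rat)))"
  by (simp add: linear_pm_def distrib_right smul_mult_left)

lemma linear_pm_mult_right: "linear_pm (\<lambda>x. (y :: ('a::comm_monoid_add \<Rightarrow>\<^sub>0 rat)) * x)"
  by (simp add: linear_pm_def distrib_left smul_mult_right)

lemma linear_pm_plus: "linear_pm L \<Longrightarrow> linear_pm L' \<Longrightarrow> linear_pm (\<lambda>x. L x + L' x)"
  by (simp add: linear_pm_def smul_add_right algebra_simps)

lemma linear_pm_id: "linear_pm (\<lambda>x. x)"
  by (simp add: linear_pm_def)

lemma lin_lin: "lin g (lin f x) = lin (\<lambda>a. lin g (f a)) x"
  by (rule linear_pm_lin_comp) simp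

lemma basis_mult: "basis a * basis b = basis (a + b)"
  by (simp add: basis_def mult_single)

lemma basis_zero_one: "basis 0 = 1"
  by (simp add: basis_def)

lemma lookup_basis: "Poly_Mapping.lookup (basis a) b = (if a = b then 1 else 0)"
  by (simp add: basis_def lookup_single when_def)

lemma keys_basis[simp]: "Poly_Mapping.keys (basis a) = {a}"
  by (simp add: basis_def)

section \<open>Tensors\<close>

lemma tens_lin: "tens x y = lin (\<lambda>a. lin (\<lambda>b. basis (a, b)) y) x"
  unfolding tens_def lin_def basis_def
  by (simp add: smul_sum mult.commute)

lemma linear_pm_tens_left: "linear_pm (\<lambda>x. tens x y)"
  unfolding tens_lin by simp

lemma linear_pm_tens_right: "linear_pm (\<lambda>y. tens x y)"
  unfolding tens_lin
  by (rule linear_pmI) (simp_all add: lin_add lin_smul lin_fun_add lin_fun_smul)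

lemma tens_basis[simp]: "tens (basis a) (basis b) = basis (a, b)"
  unfolding tens_lin by simp

lemma tens_add_left: "tens (x + y) z = tens x z + tens y z"
  using linear_pm_tens_left linear_pm_add by blast
lemma tens_add_right: "tens z (x + y) = tens z x + tens z y"
  using linear_pm_tens_right[of z] linear_pm_add by blast
lemma tens_smul_left: "tens (smul r x) z = smul r (tens x z)"
  using linear_pm_tens_left linear_pm_smul by blast
lemma tens_smul_right: "tens z (smul r x) = smul r (tens z x)"
  using linear_pm_tens_right[of z] linear_pm_smul by blast
lemma tens_zero_left[simp]: "tens 0 z = 0"
  by (simp add: tens_def)
lemma tens_zero_right[simp]: "tens z 0 = 0"
  by (simp add: tens_def)
lemma tens_sum_left: "tens (sum f S) z = (\<Sum>i\<in>S. tens (f i) z)"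
  using linear_pm_tens_left linear_pm_sum by blast
lemma tens_sum_right: "tens z (sum f S) = (\<Sum>i\<in>S. tens z (f i))"
  using linear_pm_tens_right linear_pm_sum by blast
lemma tens_diff_left: "tens (x - y) z = tens x z - tens y z"
  by (metis add_diff_cancel_right' diff_add_cancel tens_add_left)
lemma tens_diff_right: "tens z (x - y) = tens z x - tens z y"
  by (metis add_diff_cancel_right' diff_add_cancel tens_add_right)

lemma lp_mult_r: "linear_pm L \<Longrightarrow> linear_pm (\<lambda>x. (c::'a::comm_monoid_add \<Rightarrow>\<^sub>0 rat) * L x)"
  using linear_pm_comp[OF linear_pm_mult_right, of L c] by simp
lemma lp_mult_l: "linear_pm L \<Longrightarrow> linear_pm (\<lambda>x. L x * (c::'a::monoid_add \<Rightarrow>\<^sub>0 rat))"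
  using linear_pm_comp[OF linear_pm_mult_left, of L c] by simp
lemma lp_tens_l: "linear_pm L \<Longrightarrow> linear_pm (\<lambda>x. tens (L x) c)"
  using linear_pm_comp[OF linear_pm_tens_left, of L c] by simp
lemma lp_tens_r: "linear_pm L \<Longrightarrow> linear_pm (\<lambda>x. tens c (L x))"
  using linear_pm_comp[OF linear_pm_tens_right, of L c] by simp
lemma lp_lin: "linear_pm L \<Longrightarrow> linear_pm (\<lambda>x. lin f (L x))"
  using linear_pm_comp[OF linear_pm_lin, of L f] by simp
lemma lp_plus: "linear_pm L \<Longrightarrow> linear_pm L' \<Longrightarrow> linear_pm (\<lambda>x. L x + L' x)"
  by (rule linear_pm_plus)
lemma lp_const0: "linear_pm (\<lambda>x. 0)"
  by (simp add: linear_pm_def)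

lemmas lp_intros = lp_mult_r lp_mult_l lp_tens_l lp_tens_r lp_lin lp_plus linear_pm_id lp_const0

lemma tens_mult:
  fixes x u :: "'a::comm_monoid_add \<Rightarrow>\<^sub>0 rat" and y v :: "'b::comm_monoid_add \<Rightarrow>\<^sub>0 rat"
  shows "tens x y * tens u v = tens (x * u) (y * v)"
proof -
  have 1: "tens (basis a) (basis b) * tens u (basis d) = tens (basis a * u) (basis b * basis d)" for a and b d :: 'b
  proof (rule linear_pm_eqI[where L="\<lambda>u. tens (basis a) (basis b) * tens u (basis d)"
            and L'="\<lambda>u. tens (basis a * u) (basis b * basis d)"])
    show "linear_pm (\<lambda>u. tens (basis a) (basis b) * tens u (basis d))"
      by (intro lp_intros)
    show "linear_pm (\<lambda>u. tens (basis a * u) (basis b * basis d))"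
      by (intro lp_intros)
  qed (simp add: basis_mult)
  have 2: "tens x (basis b) * tens u (basis d) = tens (x * u) (basis b * basis d)" for b d :: 'b
  proof (rule linear_pm_eqI[where L="\<lambda>x. tens x (basis b) * tens u (basis d)"
            and L'="\<lambda>x. tens (x * u) (basis b * basis d)"])
    show "linear_pm (\<lambda>x. tens x (basis b) * tens u (basis d))"
      by (intro lp_intros)
    show "linear_pm (\<lambda>x. tens (x * u) (basis b * basis d))"
      by (intro lp_intros)
  qed (simp only: 1)
  have 3: "tens x y * tens u (basis d) = tens (x * u) (y * basis d)" for d :: 'b
  proof (rule linear_pm_eqI[where L="\<lambda>y. tens x y * tens u (basis d)"
            and L'="\<lambda>y. tens (x * u) (y * basis d)"])
    show "linear_pm (\<lambda>y. tens x y * tens u (basis d))"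
      by (intro lp_intros)
    show "linear_pm (\<lambda>y. tens (x * u) (y * basis d))"
      by (intro lp_intros)
  qed (simp only: 2)
  show ?thesis
  proof (rule linear_pm_eqI[where L="\<lambda>v. tens x y * tens u v"
            and L'="\<lambda>v. tens (x * u) (y * v)"])
    show "linear_pm (\<lambda>v. tens x y * tens u v)"
      by (intro lp_intros)
    show "linear_pm (\<lambda>v. tens (x * u) (y * v))"
      by (intro lp_intros)
  qed (simp only: 3)
qed

lemma tens_one_one: "tens (1::'a::zero \<Rightarrow>\<^sub>0 rat) (1::'b::zero \<Rightarrow>\<^sub>0 rat) = 1"
  by (metis basis_def single_one tens_basis zero_prod_def)


lemma bilinear_eqI:
  fixes B B' :: "('a \<Rightarrow>\<^sub>0 rat) \<Rightarrow> ('b \<Rightarrow>\<^sub>0 rat) \<Rightarrow> ('c \<Rightarrow>\<^sub>0 rat)"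
  assumes "\<And>y. linear_pm (\<lambda>x. B x y)" "\<And>x. linear_pm (\<lambda>y. B x y)"
    "\<And>y. linear_pm (\<lambda>x. B' x y)" "\<And>x. linear_pm (\<lambda>y. B' x y)"
    "\<And>a b. B (basis a) (basis b) = B' (basis a) (basis b)"
  shows "B x y = B' x y"
proof -
  have *: "B (basis a) y = B' (basis a) y" for a
    by (rule linear_pm_eqI[where L="B (basis a)" and L'="B' (basis a)"]) (rule assms(2), rule assms(4), rule assms(5))
  show ?thesis
    by (rule linear_pm_eqI[where L="\<lambda>x. B x y" and L'="\<lambda>x. B' x y"]) (rule assms(1), rule assms(3), rule *)
qed

lemma lp_lin_fun: "(\<And>k. linear_pm (\<lambda>b. f k b)) \<Longrightarrow> linear_pm (\<lambda>b. lin (\<lambda>k. f k b) X)"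
  unfolding linear_pm_def by (simp add: lin_fun_add lin_fun_smul)

lemma lin_mult_right: "lin (\<lambda>k. f k * (c :: ('a::monoid_add \<Rightarrow>\<^sub>0 rat))) X = lin f X * c"
  by (simp add: linear_pm_lin_comp[OF linear_pm_mult_left])

lemma lin_mult_left: "lin (\<lambda>k. (c :: ('a::comm_monoid_add \<Rightarrow>\<^sub>0 rat)) * f k) X = c * lin f X"
  by (simp add: linear_pm_lin_comp[OF linear_pm_mult_right])

lemma linear_pm_sum_mset: assumes "linear_pm L" shows "L (sum_mset (image_mset f A)) = sum_mset (image_mset (\<lambda>x. L (f x)) A)"
  by (induction A) (auto simp: linear_pm_add[OF assms] linear_pm_zero[OF assms])

lemma image_mset_sum_mset: "image_mset f (sum_mset A) = sum_mset (image_mset (image_mset f) A)"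
  by (induction A) auto

definition T1 :: "('a \<Rightarrow>\<^sub>0 rat) \<Rightarrow> ('a \<times> 'b::zero \<Rightarrow>\<^sub>0 rat)" where "T1 x = tens x 1"
definition T2 :: "('b \<Rightarrow>\<^sub>0 rat) \<Rightarrow> ('a::zero \<times> 'b \<Rightarrow>\<^sub>0 rat)" where "T2 y = tens 1 y"

lemma tens_split: "tens x y = T1 x * T2 (y :: 'b::comm_monoid_add \<Rightarrow>\<^sub>0 rat)"
  for x :: "'a::comm_monoid_add \<Rightarrow>\<^sub>0 rat"
  by (simp add: T1_def T2_def tens_mult)

lemma T1_mult: "T1 (x * y) = T1 x * (T1 y :: ('a::comm_monoid_add \<times> 'b::comm_monoid_add \<Rightarrow>\<^sub>0 rat))"
  by (simp add: T1_def tens_mult)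
lemma T2_mult: "T2 (x * y) = T2 x * (T2 y :: ('a::comm_monoid_add \<times> 'b::comm_monoid_add \<Rightarrow>\<^sub>0 rat))"
  by (simp add: T2_def tens_mult)
lemma T1_add: "T1 (x + y) = T1 x + T1 y" by (simp add: T1_def tens_add_left)
lemma T2_add: "T2 (x + y) = T2 x + T2 y" by (simp add: T2_def tens_add_right)
lemma T1_zero[simp]: "T1 0 = 0" by (simp add: T1_def)
lemma T2_zero[simp]: "T2 0 = 0" by (simp add: T2_def)
lemma T1_one[simp]: "T1 1 = 1" by (simp add: T1_def tens_one_one)
lemma T2_one[simp]: "T2 1 = 1" by (simp add: T2_def tens_one_one)
lemma T1_basis: "T1 (basis a) = basis (a, 0)"
  by (simp add: T1_def flip: basis_zero_one)
lemma T2_basis: "T2 (basis b) = basis (0, b)"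
  by (simp add: T2_def flip: basis_zero_one)
lemma lp_T1: "linear_pm L \<Longrightarrow> linear_pm (\<lambda>x. T1 (L x))"
  unfolding T1_def by (rule lp_tens_l)
lemma lp_T2: "linear_pm L \<Longrightarrow> linear_pm (\<lambda>x. T2 (L x))"
  unfolding T2_def by (rule lp_tens_r)

section \<open>Coproduct\<close>

definition DF :: "forest \<Rightarrow> (forest \<times> forest \<Rightarrow>\<^sub>0 rat)" where
  "DF F = prod_mset (image_mset Delta_tree F)"

lemma Delta_lin: "Delta = lin DF"
  by (simp add: fun_eq_iff Delta_def DF_def[abs_def])

lemma Delta_basis[simp]: "Delta (basis F) = DF F" by (simp add: Delta_lin)
lemma DF_empty[simp]: "DF {#} = 1" by (simp add: DF_def)
lemma DF_add_mset: "DF (add_mset t F) = Delta_tree t * DF F" by (simp add: DF_def)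
lemma DF_plus: "DF (F + G) = DF F * DF G" by (simp add: DF_def)
lemma DF_single: "DF {#t#} = Delta_tree t" by (simp add: DF_def)

lemma lp_Delta: "linear_pm L \<Longrightarrow> linear_pm (\<lambda>x. Delta (L x))"
  unfolding Delta_lin by (rule lp_lin)

lemma Delta_add: "Delta (x + y) = Delta x + Delta y" by (simp add: Delta_lin lin_add)
lemma Delta_zero[simp]: "Delta 0 = 0" by (simp add: Delta_lin)
lemma Delta_one[simp]: "Delta 1 = 1" by (simp flip: basis_zero_one)

lemma Delta_mult: "Delta (x * y) = Delta x * Delta y"
  by (rule bilinear_eqI[where B="\<lambda>x y. Delta (x * y)" and B'="\<lambda>x y. Delta x * Delta y"])
     (auto intro!: lp_intros lp_Delta simp: basis_mult DF_plus)

definition Bp :: "HR \<Rightarrow> HR" where "Bp x = lin (\<lambda>F. basis {#Node F#}) x"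

definition GR :: "(forest \<times> forest \<Rightarrow>\<^sub>0 rat) \<Rightarrow> (forest \<times> forest \<Rightarrow>\<^sub>0 rat)" where
  "GR = graft_root"

lemma GR_lin: "GR = lin (\<lambda>k. basis (fst k, {#Node (snd k)#}))"
  by (rule ext) (simp add: GR_def graft_root_def split_def)

lemma lp_Bp: "linear_pm L \<Longrightarrow> linear_pm (\<lambda>x. Bp (L x))"
  unfolding Bp_def by (rule lp_lin)
lemma lp_GR: "linear_pm L \<Longrightarrow> linear_pm (\<lambda>x. GR (L x))"
  unfolding GR_lin by (rule lp_lin)
lemma Bp_basis[simp]: "Bp (basis F) = basis {#Node F#}" by (simp add: Bp_def)
lemma GR_basis[simp]: "GR (basis (A, F)) = basis (A, {#Node F#})" by (simp add: GR_lin)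

lemma GR_tens: "GR (tens x y) = tens x (Bp y)"
  by (rule bilinear_eqI[where B="\<lambda>x y. GR (tens x y)" and B'="\<lambda>x y. tens x (Bp y)"])
     (auto intro!: lp_intros lp_GR lp_Bp)

lemma GR_T1_mult: "GR (T1 x * Y) = T1 x * GR Y"
  by (rule bilinear_eqI[where B="\<lambda>x Y. GR (T1 x * Y)" and B'="\<lambda>x Y. T1 x * GR Y"])
     (auto intro!: lp_intros lp_GR lp_T1 simp: T1_basis basis_mult)

lemma Delta_tree_fun: "Delta_tree = (\<lambda>c. basis ({#c#}, {#}) + cut_sum c)"
  by (rule ext) (simp add: Delta_tree_def)

lemma Delta_tree_Node: "Delta_tree (Node cs) = basis ({#Node cs#}, {#}) + GR (DF cs)"
  by (simp add: Delta_tree_def DF_def GR_def Delta_tree_fun)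

lemma Delta_Bp: "Delta (Bp x) = T1 (Bp x) + GR (Delta x)"
  by (rule linear_pm_eqI[where L="\<lambda>x. Delta (Bp x)" and L'="\<lambda>x. T1 (Bp x) + GR (Delta x)"])
     (auto intro!: lp_intros lp_Delta lp_Bp lp_T1 lp_GR simp: DF_single Delta_tree_Node T1_basis)


section \<open>Grafting\<close>

definition gr :: "forest \<Rightarrow> forest \<Rightarrow> HR" where
  "gr M N = sum_mset (image_mset basis (graft_forest M N))"
definition grt :: "forest \<Rightarrow> rtree \<Rightarrow> HR" where
  "grt M t = sum_mset (image_mset (\<lambda>t'. basis {#t'#}) (graft M t))"
definition grl :: "forest \<Rightarrow> HR \<Rightarrow> HR" where
  "grl M y = lin (gr M) y"

lemma lp_grl: "linear_pm L \<Longrightarrow> linear_pm (\<lambda>x. grl M (L x))"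
  unfolding grl_def by (rule lp_lin)
lemma grl_basis[simp]: "grl M (basis F) = gr M F" by (simp add: grl_def)

lemma add_mset_diff_single: "s \<in># N \<Longrightarrow> add_mset t N - {#s#} = add_mset t (N - {#s#})"
  by (metis add_mset_commute add_mset_remove_trivial insert_DiffM)

lemma graft_forest_empty[simp]: "graft_forest M {#} = {#}"
  by (simp add: graft_forest_def)

lemma graft_forest_add_mset:
  "graft_forest M (add_mset t N) =
     image_mset (\<lambda>t'. add_mset t' N) (graft M t) + image_mset (add_mset t) (graft_forest M N)"
proof -
  have "image_mset (\<lambda>s. image_mset (\<lambda>t'. add_mset t' (add_mset t N - {#s#})) (graft M s)) N
      = image_mset (\<lambda>s. image_mset (add_mset t) (image_mset (\<lambda>t'. add_mset t' (N - {#s#})) (graft M s))) N"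
    by (rule image_mset_cong) (simp add: add_mset_diff_single add_mset_commute image_mset.compositionality o_def)
  then show ?thesis
    by (simp add: graft_forest_def image_mset_sum_mset image_mset.compositionality o_def)
qed

lemma gr_empty[simp]: "gr M {#} = 0" by (simp add: gr_def)

lemma basis_add_mset: "basis (add_mset t N) = tree t * basis N"
  by (simp add: basis_mult tree_def)

lemma gr_add_mset: "gr M (add_mset t N) = grt M t * basis N + tree t * gr M N"
proof -
  have "gr M (add_mset t N) = sum_mset (image_mset (\<lambda>t'. tree t' * basis N) (graft M t))
        + sum_mset (image_mset (\<lambda>F. tree t * basis F) (graft_forest M N))"
    by (simp add: gr_def graft_forest_add_mset image_mset.compositionality o_def basis_add_mset)
  also have "\<dots> = grt M t * basis N + tree t * gr M N"
    unfolding grt_def gr_def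
    by (simp add: tree_def linear_pm_sum_mset[OF linear_pm_mult_left[where y="basis N"]]
          linear_pm_sum_mset[OF linear_pm_mult_right[where y="basis {#t#}"]])
  finally show ?thesis .
qed

lemma gr_single: "gr M {#t#} = grt M t"
  using gr_add_mset[of M t "{#}"] by (simp add: basis_zero_one)

lemma gr_plus: "gr M (F + G) = gr M F * basis G + basis F * gr M G"
proof (induction F)
  case empty
  then show ?case by (simp add: basis_zero_one)
next
  case (add t F)
  have "gr M (add_mset t F + G) = gr M (add_mset t (F + G))" by simp
  also have "\<dots> = grt M t * basis (F + G) + tree t * gr M (F + G)" by (rule gr_add_mset)
  also have "\<dots> = (grt M t * basis F + tree t * gr M F) * basis G + basis (add_mset t F) * gr M G"
    by (simp add: add.IH basis_add_mset basis_mult[symmetric] algebra_simps)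
  also have "\<dots> = gr M (add_mset t F) * basis G + basis (add_mset t F) * gr M G"
    by (simp add: gr_add_mset)
  finally show ?case .
qed

lemma grl_mult: "grl M (x * y) = grl M x * y + x * grl M y"
  by (rule bilinear_eqI[where B="\<lambda>x y. grl M (x * y)" and B'="\<lambda>x y. grl M x * y + x * grl M y"])
     (auto intro!: lp_intros lp_grl simp: basis_mult gr_plus)

lemma grl_one[simp]: "grl M 1 = 0"
  by (simp flip: basis_zero_one)

lemma graft_Node: "graft M (Node cs) = add_mset (Node (cs + M)) (image_mset Node (graft_forest M cs))"
  by (simp add: graft_forest_def image_mset_sum_mset image_mset.compositionality o_def)

lemma grt_Node: "grt M (Node cs) = basis {#Node (cs + M)#} + Bp (gr M cs)"
proof -
  have "Bp (gr M cs) = sum_mset (image_mset (\<lambda>F. basis {#Node F#}) (graft_forest M cs))"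
    unfolding gr_def by (simp add: linear_pm_sum_mset[OF lp_Bp[OF linear_pm_id]])
  then show ?thesis
    unfolding grt_def graft_Node by (simp add: image_mset.compositionality o_def)
qed

definition LM :: "forest \<Rightarrow> HR \<Rightarrow> (forest \<times> forest \<Rightarrow>\<^sub>0 rat)" where
  "LM M b = lin (\<lambda>k. tens (basis (fst k)) (grl (snd k) b)) (DF M)"

definition Phi :: "forest \<Rightarrow> (forest \<times> forest \<Rightarrow>\<^sub>0 rat) \<Rightarrow> (forest \<times> forest \<Rightarrow>\<^sub>0 rat)" where
  "Phi M T = lin (\<lambda>k. T1 (basis (fst k)) * LM M (basis (snd k)) + T1 (gr M (fst k)) * T2 (basis (snd k))) T"

lemma lp_LM: "linear_pm L \<Longrightarrow> linear_pm (\<lambda>x. LM M (L x))"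
  unfolding LM_def by (intro lp_lin_fun lp_intros lp_grl)

lemma lp_Phi: "linear_pm L \<Longrightarrow> linear_pm (\<lambda>x. Phi M (L x))"
  unfolding Phi_def by (rule lp_lin)

lemma Phi_tens: "Phi M (tens a b) = T1 a * LM M b + T1 (grl M a) * T2 b"
  by (rule bilinear_eqI[where B="\<lambda>a b. Phi M (tens a b)" and B'="\<lambda>a b. T1 a * LM M b + T1 (grl M a) * T2 b"])
     (auto intro!: lp_intros lp_Phi lp_T1 lp_T2 lp_LM lp_grl simp: Phi_def)

lemma LM_one[simp]: "LM M 1 = 0"
  by (simp add: LM_def)

lemma LM_mult: "LM M (b * c) = LM M b * T2 c + T2 b * LM M c"
proof -
  have "LM M (b * c) = lin (\<lambda>k. tens (basis (fst k)) (grl (snd k) b) * T2 c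
        + T2 b * tens (basis (fst k)) (grl (snd k) c)) (DF M)"
    unfolding LM_def
    by (rule lin_cong) (simp add: grl_mult tens_add_right T2_def tens_mult)
  then show ?thesis
    by (simp add: lin_fun_add lin_mult_right lin_mult_left LM_def)
qed

lemma Phi_mult: "Phi M (X * Y) = Phi M X * Y + X * Phi M Y"
proof (rule bilinear_eqI[where B="\<lambda>X Y. Phi M (X * Y)" and B'="\<lambda>X Y. Phi M X * Y + X * Phi M Y"])
  fix a b :: "forest \<times> forest"
  obtain A B where ab: "a = (A, B)" by fastforce
  obtain C E where cd: "b = (C, E)" by fastforce
  have e1: "basis (A, B) = tens (basis A) (basis B)" "basis (C, E) = tens (basis C) (basis E)" by simp_all
  show "Phi M (basis a * basis b) = Phi M (basis a) * basis b + basis a * Phi M (basis b)"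
    apply (simp only: ab cd e1 tens_mult Phi_tens LM_mult grl_mult)
    apply (simp only: tens_split T1_mult T2_mult T1_add T2_add)
    by (simp add: algebra_simps)
qed (auto intro!: lp_intros lp_Phi)


lemma Phi_add: "Phi M (X + Y) = Phi M X + Phi M Y" by (simp add: Phi_def lin_add)
lemma GR_add: "GR (X + Y) = GR X + GR Y" by (simp add: GR_lin lin_add)
lemma Phi_zero[simp]: "Phi M 0 = 0" by (simp add: Phi_def)

lemma Phi_T1: "Phi M (T1 a) = T1 (grl M a)"
proof -
  have "Phi M (T1 a) = Phi M (tens a 1)" by (simp add: T1_def)
  also have "\<dots> = T1 (grl M a)" by (simp add: Phi_tens)
  finally show ?thesis .
qed

lemma Phi_T2: "Phi M (T2 b) = LM M b"
proof -
  have "Phi M (T2 b) = Phi M (tens 1 b)" by (simp add: T2_def)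
  also have "\<dots> = LM M b" by (simp add: Phi_tens)
  finally show ?thesis .
qed

lemma GR_T2: "GR (T2 (basis F)) = T2 (basis {#Node F#})"
  by (simp add: T2_basis)

lemma R2: "GR (T2 (basis F) * DF M) + GR (LM M (basis F)) = LM M (basis {#Node F#})"
proof -
  have 1: "GR (T2 (basis F) * DF M) = lin (\<lambda>k. tens (basis (fst k)) (basis {#Node (F + snd k)#})) (DF M)"
  proof -
    have "GR (T2 (basis F) * DF M) = GR (T2 (basis F) * lin basis (DF M))" by (simp add: lin_expand)
    also have "\<dots> = lin (\<lambda>k. GR (T2 (basis F) * basis k)) (DF M)"
      by (rule linear_pm_lin_comp) (intro lp_intros lp_GR)
    also have "\<dots> = lin (\<lambda>k. tens (basis (fst k)) (basis {#Node (F + snd k)#})) (DF M)"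
      by (rule lin_cong) (auto simp: T2_basis basis_mult)
    finally show ?thesis .
  qed
  have 2: "GR (LM M (basis F)) = lin (\<lambda>k. tens (basis (fst k)) (Bp (gr (snd k) F))) (DF M)"
    unfolding LM_def by (simp add: linear_pm_lin_comp[OF lp_GR[OF linear_pm_id]] GR_tens)
  have 3: "LM M (basis {#Node F#}) = lin (\<lambda>k. tens (basis (fst k)) (basis {#Node (F + snd k)#})
              + tens (basis (fst k)) (Bp (gr (snd k) F))) (DF M)"
    unfolding LM_def by (simp add: gr_single grt_Node tens_add_right)
  show ?thesis unfolding 1 2 3 lin_fun_add ..
qed

lemma R: "GR (X * DF M) + GR (Phi M X) = Phi M (GR X)"
proof (rule linear_pm_eqI[where L="\<lambda>X. GR (X * DF M) + GR (Phi M X)" and L'="\<lambda>X. Phi M (GR X)"])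
  show "linear_pm (\<lambda>X. GR (X * DF M) + GR (Phi M X))" by (intro lp_intros lp_GR lp_Phi)
  show "linear_pm (\<lambda>X. Phi M (GR X))" by (intro lp_intros lp_GR lp_Phi)
  fix a :: "forest \<times> forest"
  obtain A F where a: "a = (A, F)" by fastforce
  have e: "basis (A, F) = T1 (basis A) * T2 (basis F)" by (simp flip: tens_split)
  have l1: "GR (basis (A, F) * DF M) = T1 (basis A) * GR (T2 (basis F) * DF M)"
    by (simp only: e mult.assoc GR_T1_mult)
  have l2: "GR (Phi M (basis (A, F))) = T1 (basis A) * GR (LM M (basis F)) + T1 (gr M A) * T2 (basis {#Node F#})"
  proof -
    have "Phi M (basis (A, F)) = Phi M (tens (basis A) (basis F))" by simp
    also have "\<dots> = T1 (basis A) * LM M (basis F) + T1 (gr M A) * T2 (basis F)" by (simp only: Phi_tens grl_basis)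
    finally show ?thesis by (simp add: GR_add GR_T1_mult GR_T2)
  qed
  have l3: "Phi M (GR (basis (A, F))) = T1 (basis A) * LM M (basis {#Node F#}) + T1 (gr M A) * T2 (basis {#Node F#})"
  proof -
    have "Phi M (GR (basis (A, F))) = Phi M (tens (basis A) (basis {#Node F#}))" by simp
    also have "\<dots> = T1 (basis A) * LM M (basis {#Node F#}) + T1 (gr M A) * T2 (basis {#Node F#})" by (simp only: Phi_tens grl_basis)
    finally show ?thesis .
  qed
  show "GR (basis a * DF M) + GR (Phi M (basis a)) = Phi M (GR (basis a))"
  proof -
    have r: "T1 (basis A) * LM M (basis {#Node F#}) = T1 (basis A) * GR (T2 (basis F) * DF M) + T1 (basis A) * GR (LM M (basis F))"
      using R2[of F M] by (metis distrib_left)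
    show ?thesis unfolding a l1 l2 l3 r by (simp only: add.assoc)
  qed
qed

lemma tree_step:
  assumes IH: "Delta (gr M cs) = Phi M (DF cs)"
  shows "Delta (grt M (Node cs)) = Phi M (Delta_tree (Node cs))"
proof -
  have "Delta (grt M (Node cs)) = Delta_tree (Node (cs + M)) + T1 (Bp (gr M cs)) + GR (Delta (gr M cs))"
    by (simp add: grt_Node Delta_add Delta_Bp DF_single)
  also have "\<dots> = basis ({#Node (cs + M)#}, {#}) + GR (DF cs * DF M) + T1 (Bp (gr M cs)) + GR (Phi M (DF cs))"
    by (simp add: Delta_tree_Node DF_plus IH)
  also have "\<dots> = T1 (grt M (Node cs)) + Phi M (GR (DF cs))"
    by (simp add: R[symmetric] grt_Node T1_add T1_basis algebra_simps)
  also have "\<dots> = Phi M (Delta_tree (Node cs))"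
    by (simp add: Delta_tree_Node Phi_add Phi_T1 gr_single flip: T1_basis)
  finally show ?thesis .
qed

lemma forest_step:
  assumes "Delta (grt M t) = Phi M (Delta_tree t)" "Delta (gr M F) = Phi M (DF F)"
  shows "Delta (gr M (add_mset t F)) = Phi M (DF (add_mset t F))"
proof -
  have "Delta (gr M (add_mset t F)) = Delta (grt M t) * DF F + Delta_tree t * Delta (gr M F)"
    by (simp add: gr_add_mset Delta_add Delta_mult tree_def DF_single)
  also have "\<dots> = Phi M (Delta_tree t * DF F)"
    by (simp add: assms Phi_mult)
  finally show ?thesis by (simp add: DF_add_mset)
qed

lemma Phi_one[simp]: "Phi M 1 = 0"
  using Phi_T1[of M 1] by simp

lemma Delta_grt: "Delta (grt M t) = Phi M (Delta_tree t)"
proof (induction t)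
  case (Node cs)
  have "Delta (gr M F) = Phi M (DF F)" if "set_mset F \<subseteq> set_mset cs" for F
    using that
  proof (induction F)
    case empty
    then show ?case by simp
  next
    case (add t F)
    then show ?case by (intro forest_step) (auto intro: Node.IH)
  qed
  then show ?case by (intro tree_step) simp
qed

lemma Delta_gr: "Delta (gr M F) = Phi M (DF F)"
proof (induction F)
  case empty
  then show ?case by simp
next
  case (add t F)
  then show ?case by (intro forest_step Delta_grt)
qed

lemma Delta_grl: "Delta (grl M x) = Phi M (Delta x)"
  by (rule linear_pm_eqI[where L="\<lambda>x. Delta (grl M x)" and L'="\<lambda>x. Phi M (Delta x)"])
     (auto intro!: lp_intros lp_Delta lp_grl lp_Phi simp: Delta_gr)

lemma Delta_grl_prim:
  assumes "primitive q"
  shows "Delta (grl M q) = T1 (grl M q) + LM M q"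
proof -
  have "Delta q = T1 q + T2 q" using assms by (simp add: primitive_def T1_def T2_def)
  then show ?thesis by (simp add: Delta_grl Phi_add Phi_T1 Phi_T2)
qed


lemma keys_smul_sub: "Poly_Mapping.keys (smul r x) \<subseteq> Poly_Mapping.keys x"
  by (auto simp: in_keys_iff)

lemma keys_lin: "Poly_Mapping.keys (lin f x) \<subseteq> (\<Union>a\<in>Poly_Mapping.keys x. Poly_Mapping.keys (f a))"
proof -
  have "Poly_Mapping.keys (lin f x) \<subseteq> (\<Union>a\<in>Poly_Mapping.keys x. Poly_Mapping.keys (smul (Poly_Mapping.lookup x a) (f a)))"
    unfolding lin_def by (rule keys_sum)
  also have "\<dots> \<subseteq> (\<Union>a\<in>Poly_Mapping.keys x. Poly_Mapping.keys (f a))"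
    by (intro UN_mono subset_refl keys_smul_sub)
  finally show ?thesis .
qed

lemma lookup_lin: "Poly_Mapping.lookup (lin f x) k = (\<Sum>a\<in>Poly_Mapping.keys x. Poly_Mapping.lookup x a * Poly_Mapping.lookup (f a) k)"
  by (simp add: lin_def lookup_sum)

lemma weight_empty[simp]: "weight {#} = 0" by (simp add: weight_def)
lemma weight_add_mset[simp]: "weight (add_mset t F) = weight_tree t + weight F" by (simp add: weight_def)
lemma weight_plus[simp]: "weight (F + G) = weight F + weight G" by (simp add: weight_def)
lemma weight_tree_pos: "weight_tree t > 0" by (cases t) simp
lemma weight_tree_Node: "weight_tree (Node cs) = Suc (weight cs)" by (simp add: weight_def)
lemma weight_zero_iff: "weight F = 0 \<longleftrightarrow> F = {#}"
  by (cases F) (auto simp: weight_tree_pos)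

definition wt :: "forest \<times> forest \<Rightarrow> nat" where "wt k = weight (fst k) + weight (snd k)"

lemma keys_prod_mset_wt:
  assumes "\<And>t. t \<in># F \<Longrightarrow> Poly_Mapping.keys (f t) \<subseteq> {k. wt k = g t}"
  shows "Poly_Mapping.keys (prod_mset (image_mset f F)) \<subseteq> {k. wt k = sum_mset (image_mset g F)}"
  using assms
proof (induction F)
  case empty
  then show ?case by (simp add: wt_def zero_prod_def)
next
  case (add t F)
  have "Poly_Mapping.keys (f t * prod_mset (image_mset f F)) \<subseteq>
        {a + b |a b. a \<in> Poly_Mapping.keys (f t) \<and> b \<in> Poly_Mapping.keys (prod_mset (image_mset f F))}"
    by (rule keys_mult)
  also have "\<dots> \<subseteq> {k. wt k = sum_mset (image_mset g (add_mset t F))}"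
  proof
    fix k assume "k \<in> {a + b |a b. a \<in> Poly_Mapping.keys (f t) \<and> b \<in> Poly_Mapping.keys (prod_mset (image_mset f F))}"
    then obtain a b where k: "k = a + b" and a: "a \<in> Poly_Mapping.keys (f t)"
      and b: "b \<in> Poly_Mapping.keys (prod_mset (image_mset f F))" by blast
    have "wt a = g t" using a add.prems by auto
    moreover have "wt b = sum_mset (image_mset g F)" using b add.prems add.IH by auto
    ultimately show "k \<in> {k. wt k = sum_mset (image_mset g (add_mset t F))}"
      by (simp add: k wt_def)
  qed
  finally show ?case by simp
qed

lemma keys_GR: "Poly_Mapping.keys (GR X) \<subseteq> {(fst k, {#Node (snd k)#}) | k. k \<in> Poly_Mapping.keys X}"
proof
  fix x assume x: "x \<in> Poly_Mapping.keys (GR X)"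
  have "x \<in> (\<Union>k\<in>Poly_Mapping.keys X. Poly_Mapping.keys (basis (fst k, {#Node (snd k)#}) :: forest \<times> forest \<Rightarrow>\<^sub>0 rat))"
    using keys_lin[of "\<lambda>k. basis (fst k, {#Node (snd k)#})" X] x unfolding GR_lin by blast
  then obtain k where "k \<in> Poly_Mapping.keys X" "x = (fst k, {#Node (snd k)#})"
    by (simp only: keys_basis) blast
  then show "x \<in> {(fst k, {#Node (snd k)#}) | k. k \<in> Poly_Mapping.keys X}" by blast
qed

lemma keys_Delta_tree: "Poly_Mapping.keys (Delta_tree t) \<subseteq> {k. wt k = weight_tree t}"
proof (induction t)
  case (Node cs)
  have kd: "Poly_Mapping.keys (DF cs) \<subseteq> {k. wt k = sum_mset (image_mset weight_tree cs)}"
    unfolding DF_def by (rule keys_prod_mset_wt) (rule Node.IH)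
  have "Poly_Mapping.keys (GR (DF cs)) \<subseteq> {k. wt k = weight_tree (Node cs)}"
  proof
    fix x assume "x \<in> Poly_Mapping.keys (GR (DF cs))"
    then obtain k where x: "x = (fst k, {#Node (snd k)#})" and k: "k \<in> Poly_Mapping.keys (DF cs)"
      using keys_GR by blast
    have "wt k = sum_mset (image_mset weight_tree cs)" using k kd by auto
    then show "x \<in> {k. wt k = weight_tree (Node cs)}" by (simp add: x wt_def weight_tree_Node weight_def)
  qed
  moreover have "Poly_Mapping.keys (basis ({#Node cs#}, {#}) :: forest \<times> forest \<Rightarrow>\<^sub>0 rat) \<subseteq> {k. wt k = weight_tree (Node cs)}"
    by (simp add: wt_def)
  moreover have "Poly_Mapping.keys (Delta_tree (Node cs)) \<subseteq> Poly_Mapping.keys (basis ({#Node cs#}, {#}) :: forest \<times> forest \<Rightarrow>\<^sub>0 rat) \<union> Poly_Mapping.keys (GR (DF cs))"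
    unfolding Delta_tree_Node by (rule keys_add)
  ultimately show ?case by blast
qed

lemma keys_DF: "Poly_Mapping.keys (DF F) \<subseteq> {k. wt k = weight F}"
  unfolding DF_def weight_def by (rule keys_prod_mset_wt) (rule keys_Delta_tree)

lemma lookup_tens: "Poly_Mapping.lookup (tens x y) (a, b) = Poly_Mapping.lookup x a * Poly_Mapping.lookup y b"
proof -
  have "Poly_Mapping.lookup (tens x y) (a, b) =
     (\<Sum>a'\<in>Poly_Mapping.keys x. \<Sum>b'\<in>Poly_Mapping.keys y.
        (if a' = a \<and> b' = b then Poly_Mapping.lookup x a' * Poly_Mapping.lookup y b' else 0))"
    by (simp add: tens_def lookup_sum lookup_single when_def)
  also have "\<dots> = (\<Sum>a'\<in>Poly_Mapping.keys x. if a' = a then (\<Sum>b'\<in>Poly_Mapping.keys y.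
        (if b' = b then Poly_Mapping.lookup x a' * Poly_Mapping.lookup y b' else 0)) else 0)"
    by (rule sum.cong) auto
  also have "\<dots> = Poly_Mapping.lookup x a * Poly_Mapping.lookup y b"
    by (simp add: in_keys_iff)
  finally show ?thesis .
qed

lemma lookup_DF_zero: "Poly_Mapping.lookup (DF F) (0, 0) = (if F = {#} then 1 else 0)"
proof (cases "F = {#}")
  case False
  then have "(0, 0) \<notin> Poly_Mapping.keys (DF F)"
    using keys_DF[of F] weight_zero_iff[of F] by (auto simp: wt_def)
  then show ?thesis using False by (simp add: in_keys_iff)
qed (simp add: lookup_one zero_prod_def)

lemma lookup_Delta_zero: "Poly_Mapping.lookup (Delta x) (0, 0) = Poly_Mapping.lookup x 0"
proof -
  have "Poly_Mapping.lookup (Delta x) (0, 0) = (\<Sum>a\<in>Poly_Mapping.keys x. if a = 0 then Poly_Mapping.lookup x a else 0)"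
    unfolding Delta_lin lookup_lin by (rule sum.cong) (auto simp: lookup_DF_zero)
  also have "\<dots> = Poly_Mapping.lookup x 0" by (simp add: in_keys_iff)
  finally show ?thesis .
qed

lemma primitive_counit: "primitive p \<Longrightarrow> Poly_Mapping.lookup p {#} = 0"
proof -
  assume "primitive p"
  then have "Poly_Mapping.lookup (Delta p) (0, 0) = Poly_Mapping.lookup p 0 * 1 + 1 * Poly_Mapping.lookup p 0"
    by (simp only: primitive_def lookup_add lookup_tens lookup_one_zero)
  then show ?thesis using lookup_Delta_zero[of p] by simp
qed


section \<open>Weight normalisation\<close>

definition Winv :: "HR \<Rightarrow> HR" where "Winv y = lin (\<lambda>N. smul (1 / of_nat (weight N)) (basis N)) y"
definition W2inv :: "(forest \<times> forest \<Rightarrow>\<^sub>0 rat) \<Rightarrow> (forest \<times> forest \<Rightarrow>\<^sub>0 rat)" where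
  "W2inv T = lin (\<lambda>k. smul (1 / of_nat (wt k)) (basis k)) T"

lemma lp_Winv: "linear_pm L \<Longrightarrow> linear_pm (\<lambda>x. Winv (L x))" unfolding Winv_def by (rule lp_lin)
lemma lp_W2inv: "linear_pm L \<Longrightarrow> linear_pm (\<lambda>x. W2inv (L x))" unfolding W2inv_def by (rule lp_lin)

lemma Delta_smul: "Delta (smul r x) = smul r (Delta x)" by (simp add: Delta_lin lin_smul)

lemma W2inv_DF: "W2inv (DF N) = smul (1 / of_nat (weight N)) (DF N)"
proof -
  have "W2inv (DF N) = lin (\<lambda>k. smul (1 / of_nat (weight N)) (basis k)) (DF N)"
    unfolding W2inv_def
  proof (rule lin_cong)
    fix k assume "k \<in> Poly_Mapping.keys (DF N)"
    then have "wt k = weight N" using keys_DF by blast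
    then show "smul (1 / of_nat (wt k)) (basis k) = smul (1 / of_nat (weight N)) (basis k)" by simp
  qed
  also have "\<dots> = smul (1 / of_nat (weight N)) (DF N)"
    by (simp only: lin_fun_smul lin_expand)
  finally show ?thesis .
qed

lemma Delta_Winv: "Delta (Winv y) = W2inv (Delta y)"
  by (rule linear_pm_eqI[where L="\<lambda>y. Delta (Winv y)" and L'="\<lambda>y. W2inv (Delta y)"])
     (auto intro!: lp_intros lp_Delta lp_Winv lp_W2inv simp: Winv_def Delta_smul W2inv_DF)

lemma T1_smul: "T1 (smul r x) = smul r (T1 x)" by (simp add: T1_def tens_smul_left)
lemma T2_smul: "T2 (smul r x) = smul r (T2 x)" by (simp add: T2_def tens_smul_right)

lemma W2inv_T1: "W2inv (T1 x) = T1 (Winv x)"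
  by (rule linear_pm_eqI[where L="\<lambda>x. W2inv (T1 x)" and L'="\<lambda>x. T1 (Winv x)"])
     (auto intro!: lp_intros lp_T1 lp_Winv lp_W2inv simp: Winv_def W2inv_def T1_basis wt_def T1_smul)

lemma W2inv_T2: "W2inv (T2 x) = T2 (Winv x)"
  by (rule linear_pm_eqI[where L="\<lambda>x. W2inv (T2 x)" and L'="\<lambda>x. T2 (Winv x)"])
     (auto intro!: lp_intros lp_T2 lp_Winv lp_W2inv simp: Winv_def W2inv_def T2_basis wt_def T2_smul)

lemma W2inv_add: "W2inv (X + Y) = W2inv X + W2inv Y" by (simp add: W2inv_def lin_add)

lemma primitive_Winv: "primitive p \<Longrightarrow> primitive (Winv p)"
  unfolding primitive_def
  by (simp add: Delta_Winv W2inv_add W2inv_T1[unfolded T1_def] W2inv_T2[unfolded T2_def])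

section \<open>The operation top\<close>

lemma top_forest_eq: "top_forest M N = smul (1 / of_nat (weight N)) (gr M N)"
  by (simp add: top_forest_def gr_def)

lemma grl_Winv: "grl M (Winv y) = (\<Sum>N\<in>Poly_Mapping.keys y. smul (Poly_Mapping.lookup y N) (smul (1 / of_nat (weight N)) (gr M N)))"
proof -
  have "grl M (Winv y) = lin (\<lambda>N. smul (1 / of_nat (weight N)) (gr M N)) y"
    unfolding grl_def Winv_def by (simp add: lin_lin lin_smul)
  then show ?thesis by (simp add: lin_def)
qed

lemma top_eq: "top x y = lin (\<lambda>M. grl M (Winv y)) x"
  unfolding top_def lin_def[of _ x] grl_Winv
  by (simp add: smul_sum top_forest_eq mult.assoc)

lemma top_basis: "top (basis M) p = grl M (Winv p)" by (simp add: top_eq)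

lemma lp_top: "linear_pm L \<Longrightarrow> linear_pm (\<lambda>x. top (L x) p)"
  unfolding top_eq by (rule lp_lin)

definition idtop :: "HR \<Rightarrow> (forest \<times> forest \<Rightarrow>\<^sub>0 rat) \<Rightarrow> (forest \<times> forest \<Rightarrow>\<^sub>0 rat)" where
  "idtop p T = lin (\<lambda>k. tens (basis (fst k)) (top (basis (snd k)) p)) T"

lemma lp_idtop: "linear_pm L \<Longrightarrow> linear_pm (\<lambda>x. idtop p (L x))"
  unfolding idtop_def by (rule lp_lin)

lemma idtop_tens: "idtop p (tens a b) = tens a (top b p)"
  by (rule bilinear_eqI[where B="\<lambda>a b. idtop p (tens a b)" and B'="\<lambda>a b. tens a (top b p)"])
     (auto intro!: lp_intros lp_idtop lp_top simp: idtop_def)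

lemma Delta_top:
  assumes "primitive p"
  shows "Delta (top x p) = T1 (top x p) + idtop p (Delta x)"
proof (rule linear_pm_eqI[where L="\<lambda>x. Delta (top x p)" and L'="\<lambda>x. T1 (top x p) + idtop p (Delta x)"])
  show "linear_pm (\<lambda>x. Delta (top x p))" by (intro lp_Delta lp_top linear_pm_id)
  show "linear_pm (\<lambda>x. T1 (top x p) + idtop p (Delta x))"
    by (intro lp_plus lp_T1 lp_top lp_idtop lp_Delta linear_pm_id)
  fix M
  have pq: "primitive (Winv p)" by (rule primitive_Winv[OF assms])
  have "idtop p (Delta (basis M)) = LM M (Winv p)"
    by (simp add: idtop_def LM_def top_basis)
  then show "Delta (top (basis M) p) = T1 (top (basis M) p) + idtop p (Delta (basis M))"
    by (simp only: top_basis Delta_grl_prim[OF pq])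
qed

lemma replicate_mset_plus: "replicate_mset (m + n) x = replicate_mset m x + replicate_mset n x"
  by (induction m) auto

lemma graft_forest_empty_aux:
  assumes "\<And>t. t \<in># F \<Longrightarrow> graft {#} t = replicate_mset (weight_tree t) t"
  shows "graft_forest {#} F = replicate_mset (weight F) F"
  using assms
proof (induction F)
  case empty
  then show ?case by simp
next
  case (add t F)
  have "graft_forest {#} (add_mset t F) =
     replicate_mset (weight_tree t) (add_mset t F) + replicate_mset (weight F) (add_mset t F)"
    by (simp add: graft_forest_add_mset add.prems add.IH)
  then show ?case by (simp add: replicate_mset_plus)
qed

lemma graft_empty: "graft {#} t = replicate_mset (weight_tree t) t"
proof (induction t)
  case (Node cs)
  have "graft_forest {#} cs = replicate_mset (weight cs) cs"
    by (rule graft_forest_empty_aux) (rule Node.IH)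
  then show ?case unfolding graft_Node by (simp add: weight_def)
qed

lemma graft_forest_empty_left: "graft_forest {#} F = replicate_mset (weight F) F"
  by (rule graft_forest_empty_aux) (rule graft_empty)

lemma of_nat_mult_smul: "of_nat n * x = smul (of_nat n) (x :: ('a::monoid_add \<Rightarrow>\<^sub>0 rat))"
  by (simp add: smul_conv_mult)

lemma gr_empty_left: "gr {#} N = smul (of_nat (weight N)) (basis N)"
  by (simp add: gr_def graft_forest_empty_left of_nat_mult_smul)

lemma top_one:
  assumes "Poly_Mapping.lookup p {#} = 0"
  shows "top 1 p = p"
proof -
  have "top 1 p = grl {#} (Winv p)" by (simp add: top_basis flip: basis_zero_one)
  also have "\<dots> = lin (\<lambda>N. smul (1 / of_nat (weight N)) (gr {#} N)) p"
    unfolding grl_def Winv_def by (simp add: lin_lin lin_smul)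
  also have "\<dots> = lin basis p"
  proof (rule lin_cong)
    fix N assume "N \<in> Poly_Mapping.keys p"
    then have "N \<noteq> {#}" using assms by (auto simp: in_keys_iff)
    then have "weight N \<noteq> 0" by (simp add: weight_zero_iff)
    then show "smul (1 / of_nat (weight N)) (gr {#} N) = basis N"
      by (simp add: gr_empty_left)
  qed
  also have "\<dots> = p" by (rule lin_expand)
  finally show ?thesis .
qed

lemma keys_sum_mset_basis: "Poly_Mapping.keys (sum_mset (image_mset basis A)) \<subseteq> set_mset A"
proof (induction A)
  case (add x A)
  have "Poly_Mapping.keys (basis x + sum_mset (image_mset basis A)) \<subseteq> Poly_Mapping.keys (basis x) \<union> Poly_Mapping.keys (sum_mset (image_mset basis A))"
    by (rule keys_add)
  with add.IH show ?case by auto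
qed simp

lemma graft_forest_nonempty: "F \<in># graft_forest M N \<Longrightarrow> F \<noteq> {#}"
  by (cases N) (auto simp: graft_forest_add_mset)

lemma counit_top: "Poly_Mapping.lookup (top x y) {#} = 0"
proof -
  have "{#} \<notin> Poly_Mapping.keys (gr M N)" for M N
    using keys_sum_mset_basis[of "graft_forest M N"] graft_forest_nonempty[of "{#}" M N]
    unfolding gr_def by blast
  then have "{#} \<notin> Poly_Mapping.keys (grl M z)" for M z
    unfolding grl_def using keys_lin[of "gr M" z] by blast
  then have "{#} \<notin> Poly_Mapping.keys (top x y)"
    unfolding top_eq using keys_lin[of "\<lambda>M. grl M (Winv y)" x] by blast
  then show ?thesis by (simp add: in_keys_iff)
qed


definition itop1 :: "HR list \<Rightarrow> HR" where "itop1 xs = (if xs = [] then 1 else itop xs)"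

lemma itop1_Nil[simp]: "itop1 [] = 1" by (simp add: itop1_def)

lemma itop1_Cons:
  assumes "Poly_Mapping.lookup q {#} = 0"
  shows "itop1 (q # qs) = top (itop1 qs) q"
proof (cases qs)
  case Nil
  then show ?thesis by (simp add: itop1_def top_one[OF assms])
next
  case (Cons q' qs')
  then show ?thesis by (simp add: itop1_def)
qed

lemma linear_idtop: "linear_pm (idtop q)"
  using lp_idtop[OF linear_pm_id, of q] by simp

lemma Delta_itop1:
  assumes "\<And>q. q \<in> set xs \<Longrightarrow> primitive q"
  shows "Delta (itop1 xs) = (\<Sum>r\<le>length xs. tens (itop1 (drop r xs)) (itop1 (take r xs)))"
  using assms
proof (induction xs)
  case Nil
  then show ?case by (simp add: tens_one_one)
next
  case (Cons q qs)
  have pq: "primitive q" using Cons.prems by simp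
  have c: "Poly_Mapping.lookup q {#} = 0" by (rule primitive_counit[OF pq])
  have IH: "Delta (itop1 qs) = (\<Sum>r\<le>length qs. tens (itop1 (drop r qs)) (itop1 (take r qs)))"
    using Cons.prems by (intro Cons.IH) simp
  have "Delta (itop1 (q # qs)) = T1 (top (itop1 qs) q) + idtop q (Delta (itop1 qs))"
    by (simp add: itop1_Cons[OF c] Delta_top[OF pq])
  also have "idtop q (Delta (itop1 qs)) = (\<Sum>r\<le>length qs. tens (itop1 (drop r qs)) (top (itop1 (take r qs)) q))"
    unfolding IH linear_pm_sum[OF linear_idtop] idtop_tens ..
  also have "\<dots> = (\<Sum>r\<le>length qs. tens (itop1 (drop (Suc r) (q # qs))) (itop1 (take (Suc r) (q # qs))))"
    by (simp add: itop1_Cons[OF c])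
  finally have L: "Delta (itop1 (q # qs)) = T1 (itop1 (q # qs)) +
      (\<Sum>r\<le>length qs. tens (itop1 (drop (Suc r) (q # qs))) (itop1 (take (Suc r) (q # qs))))"
    by (simp only: itop1_Cons[OF c])
  have R: "(\<Sum>r\<le>length (q # qs). tens (itop1 (drop r (q # qs))) (itop1 (take r (q # qs)))) =
      T1 (itop1 (q # qs)) + (\<Sum>r\<le>length qs. tens (itop1 (drop (Suc r) (q # qs))) (itop1 (take (Suc r) (q # qs))))"
    by (simp only: length_Cons sum.atMost_Suc_shift drop_0 take_0 itop1_Nil T1_def)
  show ?case using L R by simp
qed

lemma counit_itop:
  assumes "xs \<noteq> []" "\<And>q. q \<in> set xs \<Longrightarrow> primitive q"
  shows "Poly_Mapping.lookup (itop xs) {#} = 0"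
proof (cases xs)
  case Nil
  then show ?thesis using assms by simp
next
  case (Cons q qs)
  show ?thesis
  proof (cases qs)
    case Nil
    then show ?thesis using Cons assms by (simp add: primitive_counit)
  next
    case (Cons q' qs')
    then show ?thesis using \<open>xs = q # qs\<close> by (simp add: counit_top)
  qed
qed

section \<open>Decompositions\<close>

lemma decompsD:
  assumes "ds \<in> decomps a b"
  shows "ds \<noteq> []" "fst (ds ! 0) = a" "snd (ds ! (length ds - 1)) = b"
    "\<And>r. r < length ds \<Longrightarrow> fst (ds ! r) \<le> snd (ds ! r)"
    "\<And>r. Suc r < length ds \<Longrightarrow> fst (ds ! Suc r) = snd (ds ! r) + 1"
  using assms by (auto simp: decomps_def hd_conv_nth last_conv_nth)

lemma decompsI:
  assumes "ds \<noteq> []" "fst (ds ! 0) = a" "snd (ds ! (length ds - 1)) = b"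
    "\<And>r. r < length ds \<Longrightarrow> fst (ds ! r) \<le> snd (ds ! r)"
    "\<And>r. Suc r < length ds \<Longrightarrow> fst (ds ! Suc r) = snd (ds ! r) + 1"
  shows "ds \<in> decomps a b"
  using assms by (auto simp: decomps_def hd_conv_nth last_conv_nth)

lemma decomps_fst_ge:
  assumes "ds \<in> decomps a b" "r < length ds"
  shows "a + r \<le> fst (ds ! r)"
  using assms(2)
proof (induction r)
  case 0
  then show ?case using decompsD(2)[OF assms(1)] by simp
next
  case (Suc r)
  have "fst (ds ! Suc r) = snd (ds ! r) + 1" using decompsD(5)[OF assms(1) Suc.prems] .
  moreover have "fst (ds ! r) \<le> snd (ds ! r)" using decompsD(4)[OF assms(1)] Suc.prems by simp
  ultimately show ?case using Suc.IH Suc.prems by simp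
qed

lemma decomps_snd_mono:
  assumes "ds \<in> decomps a b" "r < s" "s < length ds"
  shows "snd (ds ! r) < snd (ds ! s)"
  using assms(2,3)
proof (induction s)
  case 0
  then show ?case by simp
next
  case (Suc s)
  have step: "snd (ds ! s) < snd (ds ! Suc s)"
    using decompsD(5)[OF assms(1) Suc.prems(2)] decompsD(4)[OF assms(1) Suc.prems(2)] by simp
  show ?case
  proof (cases "r = s")
    case True
    then show ?thesis using step by simp
  next
    case False
    then have "snd (ds ! r) < snd (ds ! s)" using Suc by simp
    then show ?thesis using step by simp
  qed
qed

lemma decomps_snd_le:
  assumes "ds \<in> decomps a b" "r < length ds"
  shows "snd (ds ! r) \<le> b"
proof (cases "r = length ds - 1")
  case True
  then show ?thesis using decompsD(3)[OF assms(1)] by simp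
next
  case False
  then have "snd (ds ! r) < snd (ds ! (length ds - 1))"
    using assms by (intro decomps_snd_mono[OF assms(1)]) auto
  then show ?thesis using decompsD(3)[OF assms(1)] by simp
qed

lemma decomps_elem:
  assumes "ds \<in> decomps a b" "x \<in> set ds"
  shows "a \<le> fst x \<and> fst x \<le> snd x \<and> snd x \<le> b"
proof -
  obtain r where r: "r < length ds" "x = ds ! r" using assms(2) by (auto simp: in_set_conv_nth)
  show ?thesis
    using decomps_fst_ge[OF assms(1) r(1)] decompsD(4)[OF assms(1) r(1)] decomps_snd_le[OF assms(1) r(1)] r(2)
    by simp
qed

lemma decomps_length:
  assumes "ds \<in> decomps a b"
  shows "length ds \<le> Suc b"
proof -
  have ne: "ds \<noteq> []" by (rule decompsD(1)[OF assms])
  then have l: "length ds - 1 < length ds" by simp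
  have "a + (length ds - 1) \<le> b"
    using decomps_fst_ge[OF assms l] decompsD(4)[OF assms l] decompsD(3)[OF assms] by simp
  then show ?thesis by simp
qed

lemma finite_decomps: "finite (decomps a b)"
proof (rule finite_subset)
  show "decomps a b \<subseteq> {xs. set xs \<subseteq> {0..b} \<times> {0..b} \<and> length xs \<le> Suc b}"
  proof
    fix ds assume ds: "ds \<in> decomps a b"
    have "set ds \<subseteq> {0..b} \<times> {0..b}"
    proof
      fix x assume "x \<in> set ds"
      then have "a \<le> fst x \<and> fst x \<le> snd x \<and> snd x \<le> b" by (rule decomps_elem[OF ds])
      then show "x \<in> {0..b} \<times> {0..b}" by (cases x) auto
    qed
    then show "ds \<in> {xs. set xs \<subseteq> {0..b} \<times> {0..b} \<and> length xs \<le> Suc b}"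
      using decomps_length[OF ds] by simp
  qed
  show "finite {xs. set xs \<subseteq> {0..b} \<times> {0..b} \<and> length xs \<le> Suc b}"
    by (rule finite_lists_length_le) simp
qed


lemma take_decomps:
  assumes ds: "ds \<in> decomps a b" and r: "0 < r" "r < length ds"
  shows "take r ds \<in> decomps a (snd (ds ! (r - 1)))"
proof (rule decompsI)
  have ne: "ds \<noteq> []" by (rule decompsD(1)[OF ds])
  show "take r ds \<noteq> []" using r ne by simp
  show "fst (take r ds ! 0) = a" using r decompsD(2)[OF ds] by simp
  show "snd (take r ds ! (length (take r ds) - 1)) = snd (ds ! (r - 1))" using r by simp
  show "fst (take r ds ! k) \<le> snd (take r ds ! k)" if "k < length (take r ds)" for k
    using that decompsD(4)[OF ds, of k] by simp
  show "fst (take r ds ! Suc k) = snd (take r ds ! k) + 1" if "Suc k < length (take r ds)" for k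
    using that decompsD(5)[OF ds, of k] by simp
qed

lemma drop_decomps:
  assumes ds: "ds \<in> decomps a b" and r: "0 < r" "r < length ds"
  shows "drop r ds \<in> decomps (Suc (snd (ds ! (r - 1)))) b"
proof (rule decompsI)
  show "drop r ds \<noteq> []" using r by simp
  have "fst (ds ! Suc (r - 1)) = snd (ds ! (r - 1)) + 1" using r decompsD(5)[OF ds, of "r - 1"] by simp
  then show "fst (drop r ds ! 0) = Suc (snd (ds ! (r - 1)))" using r by simp
  have "r + (length ds - r - 1) = length ds - 1" using r by simp
  then show "snd (drop r ds ! (length (drop r ds) - 1)) = b" using r decompsD(3)[OF ds] by simp
  show "fst (drop r ds ! k) \<le> snd (drop r ds ! k)" if "k < length (drop r ds)" for k
    using that decompsD(4)[OF ds, of "r + k"] by simp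
  show "fst (drop r ds ! Suc k) = snd (drop r ds ! k) + 1" if "Suc k < length (drop r ds)" for k
    using that decompsD(5)[OF ds, of "r + k"] by simp
qed

lemma append_decomps:
  assumes d1: "d1 \<in> decomps a l" and d2: "d2 \<in> decomps (Suc l) b"
  shows "d1 @ d2 \<in> decomps a b"
proof (rule decompsI)
  have n1: "d1 \<noteq> []" and n2: "d2 \<noteq> []" using decompsD(1) d1 d2 by auto
  show "d1 @ d2 \<noteq> []" using n1 by simp
  show "fst ((d1 @ d2) ! 0) = a" using n1 decompsD(2)[OF d1] by (simp add: nth_append)
  have "length d1 + length d2 - 1 = length d1 + (length d2 - 1)" using n2 by (cases d2) auto
  then show "snd ((d1 @ d2) ! (length (d1 @ d2) - 1)) = b"
    using n2 decompsD(3)[OF d2] by (simp add: nth_append)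
  show "fst ((d1 @ d2) ! k) \<le> snd ((d1 @ d2) ! k)" if "k < length (d1 @ d2)" for k
    using that decompsD(4)[OF d1, of k] decompsD(4)[OF d2, of "k - length d1"] by (simp add: nth_append)
  show "fst ((d1 @ d2) ! Suc k) = snd ((d1 @ d2) ! k) + 1" if k: "Suc k < length (d1 @ d2)" for k
  proof (cases "Suc k < length d1")
    case True
    then show ?thesis using decompsD(5)[OF d1, of k] by (simp add: nth_append)
  next
    case False
    show ?thesis
    proof (cases "Suc k = length d1")
      case True
      then have "k = length d1 - 1" by simp
      then show ?thesis using True decompsD(3)[OF d1] decompsD(2)[OF d2] by (simp add: nth_append)
    next
      case False2: False
      then have "length d1 \<le> k" using False by simp
      then have "Suc k - length d1 = Suc (k - length d1)" by simp
      moreover have "Suc (k - length d1) < length d2" using k \<open>length d1 \<le> k\<close> by simp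
      ultimately show ?thesis using decompsD(5)[OF d2, of "k - length d1"] \<open>length d1 \<le> k\<close>
        by (simp add: nth_append)
    qed
  qed
qed

lemma decomp_sum_split:
  fixes g :: "(nat \<times> nat) list \<Rightarrow> (nat \<times> nat) list \<Rightarrow> 'a::comm_monoid_add"
  shows "(\<Sum>ds\<in>decomps (Suc j) i. \<Sum>r\<in>{0<..<length ds}. g (drop r ds) (take r ds))
       = (\<Sum>l\<in>{j<..<i}. \<Sum>d2\<in>decomps (Suc l) i. \<Sum>d1\<in>decomps (Suc j) l. g d2 d1)"
proof -
  let ?S = "Sigma (decomps (Suc j) i) (\<lambda>ds. {0<..<length ds})"
  let ?T = "Sigma {j<..<i} (\<lambda>l. decomps (Suc l) i \<times> decomps (Suc j) l)"
  have L: "(\<Sum>ds\<in>decomps (Suc j) i. \<Sum>r\<in>{0<..<length ds}. g (drop r ds) (take r ds))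
      = (\<Sum>(ds, r)\<in>?S. g (drop r ds) (take r ds))"
    by (rule sum.Sigma) (simp_all add: finite_decomps)
  have R: "(\<Sum>l\<in>{j<..<i}. \<Sum>d2\<in>decomps (Suc l) i. \<Sum>d1\<in>decomps (Suc j) l. g d2 d1)
      = (\<Sum>(l, dd)\<in>?T. g (fst dd) (snd dd))"
  proof -
    have "(\<Sum>l\<in>{j<..<i}. \<Sum>d2\<in>decomps (Suc l) i. \<Sum>d1\<in>decomps (Suc j) l. g d2 d1)
        = (\<Sum>l\<in>{j<..<i}. \<Sum>dd\<in>decomps (Suc l) i \<times> decomps (Suc j) l. g (fst dd) (snd dd))"
      by (rule sum.cong[OF refl]) (simp add: sum.cartesian_product split_def)
    also have "\<dots> = (\<Sum>(l, dd)\<in>?T. g (fst dd) (snd dd))"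
      by (rule sum.Sigma) (simp_all add: finite_decomps)
    finally show ?thesis .
  qed
  have B: "(\<Sum>(ds, r)\<in>?S. g (drop r ds) (take r ds)) = (\<Sum>(l, dd)\<in>?T. g (fst dd) (snd dd))"
  proof (rule sum.reindex_bij_witness[where i="\<lambda>(l, dd). (snd dd @ fst dd, length (snd dd))"
        and j="\<lambda>(ds, r). (snd (ds ! (r - 1)), (drop r ds, take r ds))"])
    fix a assume a: "a \<in> ?S"
    obtain ds r where dr: "a = (ds, r)" by fastforce
    have ds: "ds \<in> decomps (Suc j) i" and r: "0 < r" "r < length ds" using a dr by auto
    show "(case case a of (ds, r) \<Rightarrow> (snd (ds ! (r - 1)), drop r ds, take r ds) of
          (l, dd) \<Rightarrow> (snd dd @ fst dd, length (snd dd))) = a"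
      using r by (simp add: dr)
    have r1: "r - 1 < length ds" using r by simp
    have l1: "j < snd (ds ! (r - 1))"
      using decomps_fst_ge[OF ds r1] decompsD(4)[OF ds r1] r by simp
    have l2: "snd (ds ! (r - 1)) < i"
    proof -
      have "snd (ds ! (r - 1)) < snd (ds ! (length ds - 1))"
        using r by (intro decomps_snd_mono[OF ds]) auto
      then show ?thesis using decompsD(3)[OF ds] by simp
    qed
    show "(case a of (ds, r) \<Rightarrow> (snd (ds ! (r - 1)), drop r ds, take r ds)) \<in> ?T"
      using l1 l2 take_decomps[OF ds r] drop_decomps[OF ds r] by (simp add: dr)
    show "(case (case a of (ds, r) \<Rightarrow> (snd (ds ! (r - 1)), drop r ds, take r ds)) of
          (l, dd) \<Rightarrow> g (fst dd) (snd dd)) = (case a of (ds, r) \<Rightarrow> g (drop r ds) (take r ds))"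
      by (simp add: dr)
  next
    fix b assume b: "b \<in> ?T"
    obtain l d2 d1 where b': "b = (l, (d2, d1))" by (metis prod.collapse)
    have l: "j < l" "l < i" and d2: "d2 \<in> decomps (Suc l) i" and d1: "d1 \<in> decomps (Suc j) l"
      using b b' by auto
    have n1: "d1 \<noteq> []" and n2: "d2 \<noteq> []" using decompsD(1) d1 d2 by auto
    have "snd (d1 ! (length d1 - 1)) = l" by (rule decompsD(3)[OF d1])
    then show "(case case b of (l, dd) \<Rightarrow> (snd dd @ fst dd, length (snd dd)) of
          (ds, r) \<Rightarrow> (snd (ds ! (r - 1)), drop r ds, take r ds)) = b"
      using n1 by (simp add: b' nth_append)
    show "(case b of (l, dd) \<Rightarrow> (snd dd @ fst dd, length (snd dd))) \<in> ?S"
      using append_decomps[OF d1 d2] n1 n2 by (simp add: b')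
  qed
  show ?thesis using L R B by simp
qed

definition fC :: "(nat \<Rightarrow> nat \<Rightarrow> HR) \<Rightarrow> nat \<Rightarrow> nat \<Rightarrow> HR" where
  "fC p j i = (\<Sum>ds\<in>decomps (Suc j) i. itop (map (\<lambda>(a, b). p a b) ds))"

lemma sum_atMost_split: "0 < m \<Longrightarrow> (\<Sum>r\<le>m. h r) = h 0 + h m + (\<Sum>r\<in>{0<..<m}. h r)"
  for m :: nat
proof -
  assume m: "0 < m"
  have e: "{..m} = insert 0 (insert m {0<..<m})" using m by auto
  show ?thesis unfolding e using m by (simp add: add.assoc)
qed

lemma linear_Delta: "linear_pm Delta" unfolding Delta_lin by (rule linear_pm_lin)

lemma Delta_fC:
  assumes prim: "\<And>a b. 1 \<le> a \<Longrightarrow> a \<le> b \<Longrightarrow> b \<le> n \<Longrightarrow> primitive (p a b)" and ji: "i \<le> n"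
  shows "Delta (fC p j i) = tens (fC p j i) 1 + tens 1 (fC p j i) + (\<Sum>l\<in>{j<..<i}. tens (fC p l i) (fC p j l))"
proof -
  let ?P = "\<lambda>(a, b). p a b"
  let ?I = "\<lambda>ds. itop (map ?P ds)"
  have primds: "primitive q" if ds: "ds \<in> decomps (Suc j) i" and q: "q \<in> set (map ?P ds)" for ds q
  proof -
    obtain x where x: "x \<in> set ds" "q = ?P x" using q by auto
    have "Suc j \<le> fst x \<and> fst x \<le> snd x \<and> snd x \<le> i" by (rule decomps_elem[OF ds x(1)])
    then show ?thesis using x ji by (cases x) (auto intro!: prim)
  qed
  have step: "Delta (?I ds) = tens (?I ds) 1 + tens 1 (?I ds)
      + (\<Sum>r\<in>{0<..<length ds}. tens (?I (drop r ds)) (?I (take r ds)))"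
    if ds: "ds \<in> decomps (Suc j) i" for ds
  proof -
    have ne: "ds \<noteq> []" by (rule decompsD(1)[OF ds])
    have "Delta (?I ds) = Delta (itop1 (map ?P ds))" using ne by (simp add: itop1_def)
    also have "\<dots> = (\<Sum>r\<le>length ds. tens (itop1 (drop r (map ?P ds))) (itop1 (take r (map ?P ds))))"
      using Delta_itop1[of "map ?P ds"] primds[OF ds] by simp
    also have "\<dots> = tens (?I ds) 1 + tens 1 (?I ds)
      + (\<Sum>r\<in>{0<..<length ds}. tens (itop1 (drop r (map ?P ds))) (itop1 (take r (map ?P ds))))"
      using ne by (simp add: sum_atMost_split itop1_def)
    also have "(\<Sum>r\<in>{0<..<length ds}. tens (itop1 (drop r (map ?P ds))) (itop1 (take r (map ?P ds))))
        = (\<Sum>r\<in>{0<..<length ds}. tens (?I (drop r ds)) (?I (take r ds)))"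
      by (rule sum.cong) (auto simp: itop1_def drop_map take_map)
    finally show ?thesis .
  qed
  have "Delta (fC p j i) = (\<Sum>ds\<in>decomps (Suc j) i. Delta (?I ds))"
    unfolding fC_def by (rule linear_pm_sum[OF linear_Delta])
  also have "\<dots> = (\<Sum>ds\<in>decomps (Suc j) i. tens (?I ds) 1 + tens 1 (?I ds)
      + (\<Sum>r\<in>{0<..<length ds}. tens (?I (drop r ds)) (?I (take r ds))))"
    by (rule sum.cong[OF refl]) (rule step)
  also have "\<dots> = tens (fC p j i) 1 + tens 1 (fC p j i)
      + (\<Sum>ds\<in>decomps (Suc j) i. \<Sum>r\<in>{0<..<length ds}. tens (?I (drop r ds)) (?I (take r ds)))"
    by (simp add: sum.distrib fC_def tens_sum_left tens_sum_right)
  also have "(\<Sum>ds\<in>decomps (Suc j) i. \<Sum>r\<in>{0<..<length ds}. tens (?I (drop r ds)) (?I (take r ds)))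
      = (\<Sum>l\<in>{j<..<i}. \<Sum>d2\<in>decomps (Suc l) i. \<Sum>d1\<in>decomps (Suc j) l. tens (?I d2) (?I d1))"
    by (rule decomp_sum_split)
  also have "\<dots> = (\<Sum>l\<in>{j<..<i}. tens (fC p l i) (fC p j l))"
    unfolding fC_def by (subst tens_sum_left) (simp only: tens_sum_right)
  finally show ?thesis .
qed


definition Ej :: "nat \<Rightarrow> (forest \<times> forest \<Rightarrow>\<^sub>0 rat) \<Rightarrow> (forest \<times> forest \<times> nat \<Rightarrow>\<^sub>0 rat)" where
  "Ej j S = lin (\<lambda>(A, B). basis (A, B, j)) S"

lemma Delta_id_lin: "Delta_id = lin (\<lambda>(F, i). lin (\<lambda>(A, B). basis (A, B, i)) (Delta (basis F)))"
  by (rule ext) (simp only: Delta_id_def)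
lemma id_tensor_lin: "id_tensor DC = lin (\<lambda>(F, i). tens (basis F) (DC (basis i)))"
  by (rule ext) (simp only: id_tensor_def)
lemma counit_id_lin: "counit_id = lin (\<lambda>(F, i). smul (counit (basis F)) (basis i))"
  by (rule ext) (simp only: counit_id_def)

lemma linear_Delta_id: "linear_pm Delta_id" unfolding Delta_id_lin by (rule linear_pm_lin)
lemma linear_id_tensor: "linear_pm (id_tensor DC)" unfolding id_tensor_lin by (rule linear_pm_lin)
lemma linear_counit_id: "linear_pm counit_id" unfolding counit_id_lin by (rule linear_pm_lin)
lemma linear_Ej: "linear_pm (Ej j)" unfolding Ej_def[abs_def] by (rule linear_pm_lin)

lemma lp_Ej: "linear_pm L \<Longrightarrow> linear_pm (\<lambda>x. Ej j (L x))"
  unfolding Ej_def by (rule lp_lin)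

lemma Delta_id_tens: "Delta_id (tens x (basis j)) = Ej j (Delta x)"
proof (rule linear_pm_eqI[where L="\<lambda>x. Delta_id (tens x (basis j))" and L'="\<lambda>x. Ej j (Delta x)"])
  show "linear_pm (\<lambda>x. Delta_id (tens x (basis j)))"
    using linear_pm_comp[OF linear_Delta_id linear_pm_tens_left] .
  show "linear_pm (\<lambda>x. Ej j (Delta x))" by (intro lp_Ej lp_Delta linear_pm_id)
qed (simp add: Delta_id_def Ej_def)

lemma id_tensor_tens: "id_tensor DC (tens x (basis j)) = tens x (DC (basis j))"
proof (rule linear_pm_eqI[where L="\<lambda>x. id_tensor DC (tens x (basis j))" and L'="\<lambda>x. tens x (DC (basis j))"])
  show "linear_pm (\<lambda>x. id_tensor DC (tens x (basis j)))"
    using linear_pm_comp[OF linear_id_tensor linear_pm_tens_left] .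
  show "linear_pm (\<lambda>x. tens x (DC (basis j)))" by (rule linear_pm_tens_left)
qed (simp add: id_tensor_def)

lemma tens_tens_basis: "tens x (tens y (basis j)) = Ej j (tens x y)"
  by (rule bilinear_eqI[where B="\<lambda>x y. tens x (tens y (basis j))" and B'="\<lambda>x y. Ej j (tens x y)"])
     (auto intro!: lp_intros lp_Ej simp: Ej_def)

lemma lp_counit_smul: "linear_pm (\<lambda>x. smul (Poly_Mapping.lookup x {#}) y)"
  by (rule linear_pmI) (simp_all add: lookup_add smul_add_left)

lemma counit_id_tens: "counit_id (tens x y) = smul (Poly_Mapping.lookup x {#}) y"
proof (rule bilinear_eqI[where B="\<lambda>x y. counit_id (tens x y)" and B'="\<lambda>x y. smul (Poly_Mapping.lookup x {#}) y"])
  show "linear_pm (\<lambda>x. counit_id (tens x y))" for y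
    using linear_pm_comp[OF linear_counit_id linear_pm_tens_left] .
  show "linear_pm (\<lambda>y. counit_id (tens x y))" for x
    using linear_pm_comp[OF linear_counit_id linear_pm_tens_right] .
  show "linear_pm (\<lambda>x. smul (Poly_Mapping.lookup x {#}) y)" for y by (rule lp_counit_smul)
  show "linear_pm (\<lambda>y. smul (Poly_Mapping.lookup x {#}) y)" for x
    by (rule linear_pmI) (simp_all add: smul_add_right mult.commute)
qed (simp add: counit_id_def counit_def)


lemma deltaC_fC: "deltaC p i = (\<Sum>j<i. tens (fC p j i) (basis j)) + tens 1 (basis i)"
  by (simp add: deltaC_def fC_def)

lemma keys_tens_basis: "Poly_Mapping.keys (tens x (basis j)) \<subseteq> {k. snd k = j}"
proof -
  have "tens x (basis j) = lin (\<lambda>a. basis (a, j)) x" by (simp add: tens_lin)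
  then show ?thesis using keys_lin[of "\<lambda>a. basis (a, j)" x] by auto
qed

lemma keys_deltaC: "Poly_Mapping.keys (deltaC p i) \<subseteq> {k. snd k \<le> i}"
proof -
  have "Poly_Mapping.keys (\<Sum>j<i. tens (fC p j i) (basis j)) \<subseteq> (\<Union>j<i. Poly_Mapping.keys (tens (fC p j i) (basis j)))"
    by (rule keys_sum)
  also have "\<dots> \<subseteq> {k. snd k \<le> i}"
  proof (rule UN_least)
    fix j assume "j \<in> {..<i}"
    then show "Poly_Mapping.keys (tens (fC p j i) (basis j)) \<subseteq> {k. snd k \<le> i}"
      using keys_tens_basis[of "fC p j i" j] by auto
  qed
  finally have 1: "Poly_Mapping.keys (\<Sum>j<i. tens (fC p j i) (basis j)) \<subseteq> {k. snd k \<le> i}" .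
  have 2: "Poly_Mapping.keys (tens 1 (basis i)) \<subseteq> {k. snd k \<le> i}" using keys_tens_basis[of 1 i] by auto
  have 3: "Poly_Mapping.keys (deltaC p i) \<subseteq> Poly_Mapping.keys (\<Sum>j<i. tens (fC p j i) (basis j)) \<union> Poly_Mapping.keys (tens 1 (basis i))"
    unfolding deltaC_fC by (rule keys_add)
  show ?thesis using 1 2 3 by blast
qed

lemma counit_fC:
  assumes prim: "\<And>a b. 1 \<le> a \<Longrightarrow> a \<le> b \<Longrightarrow> b \<le> n \<Longrightarrow> primitive (p a b)" and "i \<le> n"
  shows "Poly_Mapping.lookup (fC p j i) {#} = 0"
proof -
  have "Poly_Mapping.lookup (itop (map (\<lambda>(a, b). p a b) ds)) {#} = 0" if ds: "ds \<in> decomps (Suc j) i" for ds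
  proof (rule counit_itop)
    show "map (\<lambda>(a, b). p a b) ds \<noteq> []" using decompsD(1)[OF ds] by simp
    fix q assume "q \<in> set (map (\<lambda>(a, b). p a b) ds)"
    then obtain x where x: "x \<in> set ds" "q = (\<lambda>(a, b). p a b) x" by auto
    have "Suc j \<le> fst x \<and> fst x \<le> snd x \<and> snd x \<le> i" by (rule decomps_elem[OF ds x(1)])
    then show "primitive q" using x assms(2) by (cases x) (auto intro!: prim)
  qed
  then show ?thesis by (simp add: fC_def lookup_sum)
qed

lemma counit_deltaC:
  assumes prim: "\<And>a b. 1 \<le> a \<Longrightarrow> a \<le> b \<Longrightarrow> b \<le> n \<Longrightarrow> primitive (p a b)" and "i \<le> n"
  shows "counit_id (deltaC p i) = basis i"
proof -
  have "counit_id (deltaC p i) = (\<Sum>j<i. counit_id (tens (fC p j i) (basis j))) + counit_id (tens 1 (basis i))"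
    unfolding deltaC_fC by (simp add: linear_pm_add[OF linear_counit_id] linear_pm_sum[OF linear_counit_id])
  also have "\<dots> = basis i"
  proof -
    have "Poly_Mapping.lookup (fC p j i) {#} = 0" for j
      by (rule counit_fC[where p=p and n=n]) (auto intro: prim assms(2))
    then show ?thesis by (simp add: counit_id_tens)
  qed
  finally show ?thesis .
qed

lemma swap_triangle:
  fixes g :: "nat \<Rightarrow> nat \<Rightarrow> 'a::comm_monoid_add"
  shows "(\<Sum>j<a. \<Sum>l\<in>{j<..<a}. g j l) = (\<Sum>l<a. \<Sum>j<l. g j l)"
proof -
  have "(\<Sum>j<a. \<Sum>l\<in>{j<..<a}. g j l) = (\<Sum>j<a. \<Sum>l<a. if j < l then g j l else 0)"
  proof (rule sum.cong[OF refl])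
    fix j
    have e: "{j<..<a} = {l \<in> {..<a}. j < l}" by auto
    have "(\<Sum>l\<in>{j<..<a}. g j l) = (\<Sum>l\<in>{l \<in> {..<a}. j < l}. g j l)" by (simp only: e)
    also have "\<dots> = (\<Sum>l<a. if j < l then g j l else 0)" by (rule sum.inter_filter) simp
    finally show "(\<Sum>l\<in>{j<..<a}. g j l) = (\<Sum>l<a. if j < l then g j l else 0)" .
  qed
  also have "\<dots> = (\<Sum>l<a. \<Sum>j<a. if j < l then g j l else 0)" by (rule sum.swap)
  also have "\<dots> = (\<Sum>l<a. \<Sum>j<l. g j l)"
  proof (rule sum.cong[OF refl])
    fix l assume "l \<in> {..<a}"
    then have e: "{..<l} = {j \<in> {..<a}. j < l}" by auto
    have "(\<Sum>j<l. g j l) = (\<Sum>j\<in>{j \<in> {..<a}. j < l}. g j l)" by (simp only: e)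
    also have "\<dots> = (\<Sum>j<a. if j < l then g j l else 0)" by (rule sum.inter_filter) simp
    finally show "(\<Sum>j<a. if j < l then g j l else 0) = (\<Sum>j<l. g j l)" by simp
  qed
  finally show ?thesis .
qed

lemma coassoc_deltaC:
  assumes prim: "\<And>a b. 1 \<le> a \<Longrightarrow> a \<le> b \<Longrightarrow> b \<le> n \<Longrightarrow> primitive (p a b)" and an: "a \<le> n"
  shows "Delta_id (deltaC p a) = id_tensor (DeltaC p) (deltaC p a)"
proof -
  let ?f = "fC p"
  have DL: "\<And>x y. Delta_id (x + y) = Delta_id x + Delta_id y" by (rule linear_pm_add[OF linear_Delta_id])
  have DS: "\<And>g S. Delta_id (sum g S) = (\<Sum>i\<in>S. Delta_id (g i))" by (rule linear_pm_sum[OF linear_Delta_id])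
  have IL: "\<And>x y. id_tensor (DeltaC p) (x + y) = id_tensor (DeltaC p) x + id_tensor (DeltaC p) y"
    by (rule linear_pm_add[OF linear_id_tensor])
  have IS: "\<And>g S. id_tensor (DeltaC p) (sum g S) = (\<Sum>i\<in>S. id_tensor (DeltaC p) (g i))"
    by (rule linear_pm_sum[OF linear_id_tensor])
  have EL: "\<And>j x y. Ej j (x + y) = Ej j x + Ej j y" by (rule linear_pm_add[OF linear_Ej])
  have ES: "\<And>j g S. Ej j (sum g S) = (\<Sum>i\<in>S. Ej j (g i))" by (rule linear_pm_sum[OF linear_Ej])
  have DCb: "DeltaC p (basis j) = deltaC p j" for j by (simp add: DeltaC_def)
  have Dfc: "Delta (?f j a) = tens (?f j a) 1 + tens 1 (?f j a) + (\<Sum>l\<in>{j<..<a}. tens (?f l a) (?f j l))" for j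
    by (rule Delta_fC[where p=p and n=n]) (auto intro: prim an)
  define X1 where "X1 = (\<Sum>j<a. Ej j (tens (?f j a) 1))"
  define X2 where "X2 = (\<Sum>j<a. Ej j (tens 1 (?f j a)))"
  define X3 where "X3 = (\<Sum>j<a. \<Sum>l\<in>{j<..<a}. Ej j (tens (?f l a) (?f j l)))"
  define X3' where "X3' = (\<Sum>j<a. \<Sum>l<j. Ej l (tens (?f j a) (?f l j)))"
  define X4 where "X4 = Ej a (tens 1 1)"
  have X33: "X3 = X3'" unfolding X3_def X3'_def by (rule swap_triangle)
  have "Delta_id (deltaC p a) = (\<Sum>j<a. Ej j (Delta (?f j a))) + Ej a (Delta 1)"
    unfolding deltaC_fC DL DS Delta_id_tens ..
  also have "(\<Sum>j<a. Ej j (Delta (?f j a))) = X1 + X2 + X3"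
  proof -
    have "(\<Sum>j<a. Ej j (Delta (?f j a))) = (\<Sum>j<a. Ej j (tens (?f j a) 1) + Ej j (tens 1 (?f j a))
        + (\<Sum>l\<in>{j<..<a}. Ej j (tens (?f l a) (?f j l))))"
    proof (rule sum.cong[OF refl])
      fix j assume "j \<in> {..<a}"
      show "Ej j (Delta (?f j a)) = Ej j (tens (?f j a) 1) + Ej j (tens 1 (?f j a))
        + (\<Sum>l\<in>{j<..<a}. Ej j (tens (?f l a) (?f j l)))"
        unfolding Dfc EL ES ..
    qed
    then show ?thesis by (simp add: X1_def X2_def X3_def sum.distrib)
  qed
  also have "Ej a (Delta 1) = X4" by (simp add: X4_def tens_one_one)
  finally have LHS: "Delta_id (deltaC p a) = X1 + X2 + X3 + X4" .
  have "id_tensor (DeltaC p) (deltaC p a) = (\<Sum>j<a. tens (?f j a) (deltaC p j)) + tens 1 (deltaC p a)"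
    unfolding deltaC_fC[of p a] IL IS id_tensor_tens DCb ..
  also have "(\<Sum>j<a. tens (?f j a) (deltaC p j)) = X3' + X1"
  proof -
    have "(\<Sum>j<a. tens (?f j a) (deltaC p j)) = (\<Sum>j<a. (\<Sum>l<j. Ej l (tens (?f j a) (?f l j))) + Ej j (tens (?f j a) 1))"
    proof (rule sum.cong[OF refl])
      fix j
      show "tens (?f j a) (deltaC p j) = (\<Sum>l<j. Ej l (tens (?f j a) (?f l j))) + Ej j (tens (?f j a) 1)"
        unfolding deltaC_fC[of p j] tens_add_right tens_sum_right tens_tens_basis ..
    qed
    then show ?thesis by (simp add: X3'_def X1_def sum.distrib)
  qed
  also have "tens 1 (deltaC p a) = X2 + X4"
    unfolding deltaC_fC[of p a] tens_add_right tens_sum_right tens_tens_basis X2_def X4_def ..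
  finally have RHS: "id_tensor (DeltaC p) (deltaC p a) = X3' + X1 + (X2 + X4)" .
  show ?thesis unfolding LHS RHS X33 by (simp add: algebra_simps)
qed

theorem proposition5p2:
  fixes n :: nat and p :: "nat \<Rightarrow> nat \<Rightarrow> HR"
  assumes "n \<ge> 1"
    and "\<And>i j. 1 \<le> i \<Longrightarrow> i \<le> j \<Longrightarrow> j \<le> n \<Longrightarrow> primitive (p i j)"
  shows "is_left_comodule {0..n} (DeltaC p)"
proof -
  note prim = assms(2)
  have DC: "DeltaC p v = lin (deltaC p) v" for v by (simp add: DeltaC_def)
  have part1: "DeltaC p (u + v) = DeltaC p u + DeltaC p v \<and> DeltaC p (smul r v) = smul r (DeltaC p v)"
    for u v r by (simp add: DC lin_add lin_smul)
  have part2: "(\<forall>F i. Poly_Mapping.lookup (DeltaC p v) (F, i) \<noteq> 0 \<longrightarrow> i \<in> {0..n})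
      \<and> Delta_id (DeltaC p v) = id_tensor (DeltaC p) (DeltaC p v)
      \<and> counit_id (DeltaC p v) = v"
    if v: "Poly_Mapping.keys v \<subseteq> {0..n}" for v
  proof (intro conjI allI impI)
    fix F i assume "Poly_Mapping.lookup (DeltaC p v) (F, i) \<noteq> 0"
    then have "(F, i) \<in> Poly_Mapping.keys (lin (deltaC p) v)" by (simp add: DC in_keys_iff)
    then obtain a where a: "a \<in> Poly_Mapping.keys v" "(F, i) \<in> Poly_Mapping.keys (deltaC p a)"
      using keys_lin[of "deltaC p" v] by blast
    have "i \<le> a" using a(2) keys_deltaC[of p a] by auto
    then show "i \<in> {0..n}" using a(1) v by auto
  next
    have "Delta_id (DeltaC p v) = lin (\<lambda>a. Delta_id (deltaC p a)) v"
      unfolding DC by (rule linear_pm_lin_comp[OF linear_Delta_id])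
    also have "\<dots> = lin (\<lambda>a. id_tensor (DeltaC p) (deltaC p a)) v"
    proof (rule lin_cong)
      fix a assume "a \<in> Poly_Mapping.keys v"
      then have an: "a \<le> n" using v by auto
      show "Delta_id (deltaC p a) = id_tensor (DeltaC p) (deltaC p a)"
        by (rule coassoc_deltaC[where p=p and n=n, OF _ an]) (auto intro: prim)
    qed
    also have "\<dots> = id_tensor (DeltaC p) (DeltaC p v)"
      unfolding DC by (rule linear_pm_lin_comp[OF linear_id_tensor, symmetric])
    finally show "Delta_id (DeltaC p v) = id_tensor (DeltaC p) (DeltaC p v)" .
  next
    have "counit_id (DeltaC p v) = lin (\<lambda>a. counit_id (deltaC p a)) v"
      unfolding DC by (rule linear_pm_lin_comp[OF linear_counit_id])
    also have "\<dots> = lin basis v"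
    proof (rule lin_cong)
      fix a assume "a \<in> Poly_Mapping.keys v"
      then have an: "a \<le> n" using v by auto
      show "counit_id (deltaC p a) = basis a"
        by (rule counit_deltaC[where p=p and n=n, OF _ an]) (auto intro: prim)
    qed
    also have "\<dots> = v" by (rule lin_expand)
    finally show "counit_id (DeltaC p v) = v" .
  qed
  show ?thesis
    unfolding is_left_comodule_def using part1 part2 by blast
qed


end
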